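(* For every $\varepsilon>0$ there exists a nonsplit characteristically nilpotent Lie algebra $\mathfrak{h}$ such that \[\frac{\dim C^1\mathfrak{h}-\dim Z(\mathfrak{h})}{\dim Z(\mathfrak{h})}<\varepsilon.\]
   Context: All Lie algebras are finite-dimensional and complex. $C^1\mathfrak{h}=[\mathfrak{h},\mathfrak{h}]$ and $Z(\mathfrak{h})$ denotes the center. A Lie algebra is nonsplit if it is not the direct sum of two nonzero ideals. A nilpotent Lie algebra $\mathfrak{g}$ is characteristically nilpotent if there is $m$ with $\mathfrak{g}^{[m]}=0$, where $\mathfrak{g}^{[1]}=\{f(Y): f\in \mathrm{Der}(\mathfrak{g}), Y\in\mathfrak{g}\}$ and $\mathfrak{g}^{[k]}=\mathrm{Der}(\mathfrak{g})(\mathfrak{g}^{[k-1]})$ (equivalently, $\mathrm{Der}(\mathfrak{g})$ is nilpotent). *)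

theory Defs
  imports "HOL-Analysis.Analysis" "HOL-Library.Function_Algebras"
begin

text \<open>Ambient complex vector space: functions nat => complex with pointwise
operations. Every finite-dimensional complex Lie algebra is isomorphic to one
whose underlying space is a finite-dimensional subspace L of this space.\<close>

type_synonym vec = "nat \<Rightarrow> complex"

definition scl :: "complex \<Rightarrow> vec \<Rightarrow> vec" where
  "scl c v = (\<lambda>i. c * v i)"

abbreviation "vspan \<equiv> module.span scl"
abbreviation "vsubspace \<equiv> module.subspace scl"
abbreviation "vdim \<equiv> vector_space.dim scl"

text \<open>A finite-dimensional complex Lie algebra with underlying space L and bracket br
(only the restriction of br to L matters).\<close>
definition lie_algebra :: "vec set \<Rightarrow> (vec \<Rightarrow> vec \<Rightarrow> vec) \<Rightarrow> bool" where
  "lie_algebra L br \<longleftrightarrow>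
     vsubspace L \<and> (\<exists>B. finite B \<and> B \<subseteq> L \<and> vspan B = L) \<and>
     (\<forall>x\<in>L. \<forall>y\<in>L. br x y \<in> L) \<and>
     (\<forall>x\<in>L. \<forall>y\<in>L. \<forall>z\<in>L. \<forall>c. br (x + y) z = br x z + br y z \<and>
                              br (scl c x) z = scl c (br x z) \<and>
                              br z (x + y) = br z x + br z y \<and>
                              br z (scl c x) = scl c (br z x)) \<and>
     (\<forall>x\<in>L. br x x = 0) \<and>
     (\<forall>x\<in>L. \<forall>y\<in>L. \<forall>z\<in>L. br x (br y z) + br y (br z x) + br z (br x y) = 0)"

definition derived :: "vec set \<Rightarrow> (vec \<Rightarrow> vec \<Rightarrow> vec) \<Rightarrow> vec set" where
  "derived L br = vspan {br x y | x y. x \<in> L \<and> y \<in> L}"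

definition center :: "vec set \<Rightarrow> (vec \<Rightarrow> vec \<Rightarrow> vec) \<Rightarrow> vec set" where
  "center L br = {z \<in> L. \<forall>x\<in>L. br z x = 0}"

definition lie_ideal :: "vec set \<Rightarrow> (vec \<Rightarrow> vec \<Rightarrow> vec) \<Rightarrow> vec set \<Rightarrow> bool" where
  "lie_ideal L br I \<longleftrightarrow> vsubspace I \<and> I \<subseteq> L \<and> (\<forall>x\<in>L. \<forall>y\<in>I. br x y \<in> I)"

definition nonsplit :: "vec set \<Rightarrow> (vec \<Rightarrow> vec \<Rightarrow> vec) \<Rightarrow> bool" where
  "nonsplit L br \<longleftrightarrow>
     \<not> (\<exists>I J. lie_ideal L br I \<and> lie_ideal L br J \<and> I \<noteq> {0} \<and> J \<noteq> {0} \<and>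
              I \<inter> J = {0} \<and> {a + b | a b. a \<in> I \<and> b \<in> J} = L)"

fun lcs :: "vec set \<Rightarrow> (vec \<Rightarrow> vec \<Rightarrow> vec) \<Rightarrow> nat \<Rightarrow> vec set" where
  "lcs L br 0 = L"
| "lcs L br (Suc k) = vspan {br x y | x y. x \<in> L \<and> y \<in> lcs L br k}"

definition nilpotent_lie :: "vec set \<Rightarrow> (vec \<Rightarrow> vec \<Rightarrow> vec) \<Rightarrow> bool" where
  "nilpotent_lie L br \<longleftrightarrow> (\<exists>k. lcs L br k = {0})"

definition derivations :: "vec set \<Rightarrow> (vec \<Rightarrow> vec \<Rightarrow> vec) \<Rightarrow> (vec \<Rightarrow> vec) set" where
  "derivations L br = {f. (\<forall>x\<in>L. f x \<in> L) \<and>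
      (\<forall>x\<in>L. \<forall>y\<in>L. \<forall>c. f (x + y) = f x + f y \<and> f (scl c x) = scl c (f x)) \<and>
      (\<forall>x\<in>L. \<forall>y\<in>L. f (br x y) = br (f x) y + br x (f y))}"

fun char_seq :: "vec set \<Rightarrow> (vec \<Rightarrow> vec \<Rightarrow> vec) \<Rightarrow> nat \<Rightarrow> vec set" where
  "char_seq L br 0 = L"
| "char_seq L br (Suc k) = {f y | f y. f \<in> derivations L br \<and> y \<in> char_seq L br k}"

definition char_nilpotent :: "vec set \<Rightarrow> (vec \<Rightarrow> vec \<Rightarrow> vec) \<Rightarrow> bool" where
  "char_nilpotent L br \<longleftrightarrow> nilpotent_lie L br \<and> (\<exists>m\<ge>1. char_seq L br m = {0})"

end

theory Submission
  imports Defs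
begin


lemma scl_apply [simp]: "scl c v i = c * v i" by (simp add: scl_def)

interpretation V: vector_space scl
  by unfold_locales (auto simp: scl_def fun_eq_iff algebra_simps)

lemma scl_neg: "scl (-1) v = - v" by (simp add: fun_eq_iff)

definition ev :: "nat \<Rightarrow> vec" where "ev x = (\<lambda>y. if y = x then 1 else 0)"
definition wd :: "vec \<Rightarrow> vec \<Rightarrow> nat \<Rightarrow> nat \<Rightarrow> complex" where
  "wd f g p q = f p * g q - f q * g p"
definition kb :: "vec \<Rightarrow> vec \<Rightarrow> vec" where
  "kb f g r = (if r = 4 then wd f g 0 1 - wd f g 2 3 else if r = 5 then wd f g 0 2 + wd f g 1 3
    else if r = 6 then wd f g 0 3 - wd f g 1 5 - wd f g 2 4
    else if r = 7 then wd f g 1 2 - wd f g 0 4 - wd f g 3 5 else 0)"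
definition cpt :: "nat \<Rightarrow> vec \<Rightarrow> vec" where
  "cpt i u = (\<lambda>s. if s < 8 then u (8*i+s) else 0)"
definition aidx :: "nat \<Rightarrow> nat \<Rightarrow> nat \<Rightarrow> nat" where "aidx N i j = 8*N + N*i + j"
definition hb :: "nat \<Rightarrow> vec \<Rightarrow> vec \<Rightarrow> vec" where
 "hb N u v = (\<lambda>x. if x < 8*N then kb (cpt (x div 8) u) (cpt (x div 8) v) (x mod 8)
     else if x - 8*N < N*N \<and> (x - 8*N) div N < (x - 8*N) mod N then
        u (8*((x-8*N) div N)) * v (8*((x-8*N) mod N)) - v (8*((x-8*N) div N)) * u (8*((x-8*N) mod N))
     else 0)"
definition Vd :: "nat \<Rightarrow> nat set" where
  "Vd N = {x. x < 8*N} \<union> {aidx N i j | i j. i < j \<and> j < N}"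
definition LL :: "nat \<Rightarrow> vec set" where "LL N = {v. \<forall>x. x \<notin> Vd N \<longrightarrow> v x = 0}"

lemma kb_jacobi: "kb f (kb g h) + kb g (kb h f) + kb h (kb f g) = 0"
  by (rule ext) (simp add: kb_def wd_def algebra_simps)

lemma kb_alt: "kb f f = 0"
  by (rule ext) (simp add: kb_def wd_def)

lemma kb_anti: "kb f g = - kb g f"
  by (rule ext) (simp add: kb_def wd_def algebra_simps)

lemma kb_low: "s < 4 \<or> 8 \<le> s \<Longrightarrow> kb f g s = 0"
  by (auto simp: kb_def)

lemma cpt_hb: "k < N \<Longrightarrow> cpt k (hb N u v) = kb (cpt k u) (cpt k v)"
proof (rule ext)
  fix s assume k: "k < N"
  show "cpt k (hb N u v) s = kb (cpt k u) (cpt k v) s"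
  proof (cases "s < 8")
    case True
    then have "8*k+s < 8*N" using k by linarith
    moreover have "(8*k+s) div 8 = k" "(8*k+s) mod 8 = s" using True by auto
    ultimately show ?thesis using True by (simp add: cpt_def hb_def)
  next
    case False then show ?thesis by (simp add: cpt_def kb_low)
  qed
qed

lemma aidx_ge: "aidx N i j \<ge> 8*N" by (simp add: aidx_def)

lemma aidx_parts: assumes "j < N" shows "(aidx N i j - 8*N) div N = i" "(aidx N i j - 8*N) mod N = j"
  using assms by (auto simp: aidx_def)

lemma hb_aidx: assumes "i < j" "j < N"
  shows "hb N u v (aidx N i j) = u (8*i) * v (8*j) - v (8*i) * u (8*j)"
proof -
  have "aidx N i j - 8*N < N*N"
  proof -
    have "N*i + j < N*N"
    proof -
      have "N*i + j < N*i + N" using assms by simp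
      also have "\<dots> = N*(i+1)" by simp
      also have "\<dots> \<le> N*N" using assms by (intro mult_le_mono2) simp
      finally show ?thesis .
    qed
    then show ?thesis by (simp add: aidx_def)
  qed
  moreover have "\<not> aidx N i j < 8*N" by (simp add: aidx_def)
  ultimately show ?thesis using aidx_parts[OF assms(2), of i] assms(1) by (simp add: hb_def)
qed


lemma sum_vec_apply: "(sum f X :: vec) y = (\<Sum>x\<in>X. f x y)"
  by (induction X rule: infinite_finite_induct) auto

lemma Vd_finite: "finite (Vd N)"
proof -
  have "Vd N \<subseteq> {..< 8*N + N*N}"
  proof
    fix x assume "x \<in> Vd N"
    then consider "x < 8*N" | i j where "i < j" "j < N" "x = aidx N i j" by (auto simp: Vd_def)
    then show "x \<in> {..< 8*N + N*N}"
    proof cases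
      case 2
      have "N*i + j < N*i + N" using 2 by simp
      also have "\<dots> = N*(i+1)" by simp
      also have "\<dots> \<le> N*N" using 2 by (intro mult_le_mono2) simp
      finally show ?thesis using 2 by (simp add: aidx_def)
    qed simp
  qed
  then show ?thesis by (rule finite_subset) simp
qed

lemma LL_subspace: "V.subspace (LL N)"
  by (auto simp: V.subspace_def LL_def)

lemma hb_in_LL: "hb N u v \<in> LL N"
proof -
  { fix x assume x: "x \<notin> Vd N"
    then have x1: "\<not> x < 8*N" by (simp add: Vd_def)
    have "hb N u v x = 0"
    proof (cases "x - 8*N < N*N \<and> (x - 8*N) div N < (x - 8*N) mod N")
      case True
      then have N: "N > 0" by (cases "N = 0") auto
      define i where "i = (x - 8*N) div N"
      define j where "j = (x - 8*N) mod N"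
      have "j < N" using N by (simp add: j_def)
      moreover have "i < j" using True by (simp add: i_def j_def)
      moreover have "x = aidx N i j" using x1 by (simp add: aidx_def i_def j_def)
      ultimately have "x \<in> Vd N" by (auto simp: Vd_def)
      then show ?thesis using x by simp
    next
      case False with x1 show ?thesis unfolding hb_def by auto
    qed }
  then show ?thesis by (simp add: LL_def)
qed

lemma vec_eqI:
  assumes "u \<in> LL N" "v \<in> LL N" "\<And>k. k < N \<Longrightarrow> cpt k u = cpt k v"
    "\<And>i j. i < j \<Longrightarrow> j < N \<Longrightarrow> u (aidx N i j) = v (aidx N i j)"
  shows "u = v"
proof (rule ext)
  fix x
  show "u x = v x"
  proof (cases "x \<in> Vd N")
    case False then show ?thesis using assms(1,2) by (simp add: LL_def)
  next
    case True
    then consider "x < 8*N" | i j where "i < j" "j < N" "x = aidx N i j" by (auto simp: Vd_def)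
    then show ?thesis
    proof cases
      case 1
      define k where "k = x div 8"
      define s where "s = x mod 8"
      have x: "x = 8*k + s" by (simp add: k_def s_def)
      have "k < N" using 1 by (simp add: k_def)
      have "s < 8" by (simp add: s_def)
      have "cpt k u s = cpt k v s" using assms(3)[OF \<open>k < N\<close>] by simp
      then show ?thesis using \<open>s < 8\<close> x by (simp add: cpt_def)
    next
      case 2 then show ?thesis using assms(4) by simp
    qed
  qed
qed

lemma hb_add1: "hb N (u + v) w = hb N u w + hb N v w"
  by (rule ext) (simp add: hb_def kb_def wd_def cpt_def algebra_simps)
lemma hb_add2: "hb N w (u + v) = hb N w u + hb N w v"
  by (rule ext) (simp add: hb_def kb_def wd_def cpt_def algebra_simps)
lemma hb_scl1: "hb N (scl c u) w = scl c (hb N u w)"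
  by (rule ext) (simp add: hb_def kb_def wd_def cpt_def algebra_simps)
lemma hb_scl2: "hb N w (scl c u) = scl c (hb N w u)"
  by (rule ext) (simp add: hb_def kb_def wd_def cpt_def algebra_simps)
lemma hb_anti: "hb N u v = - hb N v u"
  by (rule ext) (simp add: hb_def kb_def wd_def cpt_def algebra_simps)
lemma hb_alt: "hb N u u = 0"
  by (rule ext) (auto simp: hb_def kb_def wd_def cpt_def algebra_simps)
lemma hb_diff1: "hb N (u - v) w = hb N u w - hb N v w"
  by (rule ext) (simp add: hb_def kb_def wd_def cpt_def algebra_simps)
lemma hb_diff2: "hb N w (u - v) = hb N w u - hb N w v"
  by (rule ext) (simp add: hb_def kb_def wd_def cpt_def algebra_simps)
lemma hb_zero1 [simp]: "hb N 0 u = 0"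
  by (rule ext) (simp add: hb_def kb_def wd_def cpt_def)
lemma hb_zero2 [simp]: "hb N u 0 = 0"
  by (rule ext) (simp add: hb_def kb_def wd_def cpt_def)
lemma hb_neg1: "hb N (- u) w = - hb N u w"
  by (rule ext) (simp add: hb_def kb_def wd_def cpt_def algebra_simps)

lemma hb_at0: "i < N \<Longrightarrow> hb N u v (8*i) = 0"
  using fun_cong[OF cpt_hb[of i N u v], of 0] by (simp add: cpt_def kb_def)

lemma hb_jacobi: "hb N x (hb N y z) + hb N y (hb N z x) + hb N z (hb N x y) = 0"
proof (rule vec_eqI[of _ N])
  show "hb N x (hb N y z) + hb N y (hb N z x) + hb N z (hb N x y) \<in> LL N"
    using LL_subspace hb_in_LL by (meson V.subspace_add)
  show "0 \<in> LL N" by (simp add: LL_def)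
  fix k assume k: "k < N"
  have "cpt k (a + b) = cpt k a + cpt k b" for a b by (auto simp: cpt_def fun_eq_iff)
  then show "cpt k (hb N x (hb N y z) + hb N y (hb N z x) + hb N z (hb N x y)) = cpt k 0"
    using kb_jacobi by (simp add: cpt_hb k) (simp add: cpt_def fun_eq_iff)
next
  fix i j assume ij: "i < j" "j < N"
  then show "(hb N x (hb N y z) + hb N y (hb N z x) + hb N z (hb N x y)) (aidx N i j) = 0 (aidx N i j)"
    by (simp add: hb_aidx hb_at0)
qed


lemma ev_in_LL: "x \<in> Vd N \<Longrightarrow> ev x \<in> LL N"
  by (auto simp: LL_def ev_def)

lemma expand_vec:
  assumes "finite X" "\<And>y. y \<notin> X \<Longrightarrow> v y = 0"
  shows "v = (\<Sum>x\<in>X. scl (v x) (ev x))"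
proof (rule ext)
  fix y
  have "(\<Sum>x\<in>X. scl (v x) (ev x)) y = (\<Sum>x\<in>X. v x * (if y = x then 1 else 0))"
    by (simp add: sum_vec_apply ev_def)
  also have "\<dots> = (\<Sum>x\<in>X. if y = x then v x else 0)" by (rule sum.cong) auto
  also have "\<dots> = (if y \<in> X then v y else 0)" using assms(1) by (simp add: sum.delta)
  also have "\<dots> = v y" using assms(2) by auto
  finally show "v y = (\<Sum>x\<in>X. scl (v x) (ev x)) y" by simp
qed

lemma in_span_ev:
  assumes "finite X" "\<And>y. y \<notin> X \<Longrightarrow> v y = 0"
  shows "v \<in> vspan (ev ` X)"
proof -
  have "(\<Sum>x\<in>X. scl (v x) (ev x)) \<in> vspan (ev ` X)"
    by (intro V.span_sum V.span_scale V.span_base) auto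
  then show ?thesis using expand_vec[OF assms] by simp
qed

lemma span_LL: "vspan (ev ` Vd N) = LL N"
proof
  show "vspan (ev ` Vd N) \<subseteq> LL N"
    by (rule V.span_minimal) (auto simp: ev_in_LL LL_subspace)
  show "LL N \<subseteq> vspan (ev ` Vd N)"
    by (auto intro!: in_span_ev Vd_finite simp: LL_def)
qed

lemma lie_LL: "lie_algebra (LL N) (hb N)"
  unfolding lie_algebra_def
proof (intro conjI ballI allI)
  show "vsubspace (LL N)" by (rule LL_subspace)
  show "\<exists>B. finite B \<and> B \<subseteq> LL N \<and> vspan B = LL N"
    by (intro exI[of _ "ev ` Vd N"]) (auto simp: Vd_finite ev_in_LL span_LL)
qed (auto simp: hb_in_LL hb_add1 hb_add2 hb_scl1 hb_scl2 hb_alt hb_jacobi)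

definition kw :: "nat \<Rightarrow> nat" where "kw s = (if s < 4 then 1 else if s < 6 then 2 else 3)"
definition wt :: "nat \<Rightarrow> nat \<Rightarrow> nat" where "wt N x = (if x < 8*N then kw (x mod 8) else 2)"
definition SS :: "nat \<Rightarrow> nat \<Rightarrow> vec set" where
  "SS N r = {v \<in> LL N. \<forall>x. wt N x < r \<longrightarrow> v x = 0}"

lemma SS_subspace: "V.subspace (SS N r)"
  by (auto simp: V.subspace_def SS_def LL_def)

lemma SS_mono: "r \<le> r' \<Longrightarrow> SS N r' \<subseteq> SS N r"
  by (auto simp: SS_def)

lemma wt_ge1: "wt N x \<ge> 1" by (simp add: wt_def kw_def)
lemma wt_le3: "wt N x \<le> 3" by (simp add: wt_def kw_def)

lemma SS_1: "SS N 1 = LL N"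
proof -
  have "\<not> wt N x < 1" for x using wt_ge1[of N x] by simp
  then show ?thesis unfolding SS_def by blast
qed

lemma SS_4: "SS N 4 = {0}"
proof -
  have "v = 0" if "v \<in> SS N 4" for v
    using that wt_le3 by (auto simp: SS_def fun_eq_iff) (metis le_imp_less_Suc numeral_eq_Suc pred_numeral_simps(2) semiring_norm(26) semiring_norm(27))
  moreover have "0 \<in> SS N 4" by (simp add: SS_def LL_def)
  ultimately show ?thesis by blast
qed

lemma kb_filt:
  assumes f: "\<And>p. kw p < a \<Longrightarrow> f p = 0" and g: "\<And>q. kw q < b \<Longrightarrow> g q = 0"
    and s: "kw s < a + b"
  shows "kb f g s = 0"
proof -
  have fg: "f p * g q = 0" if "kw p + kw q < a + b" for p q
  proof (cases "kw p < a")
    case True then show ?thesis using f by simp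
  next
    case False then have "kw q < b" using that by linarith
    then show ?thesis using g by simp
  qed
  have c4: "kb f g 4 = 0" if "kw 4 < a + b"
    using that by (simp add: kb_def wd_def kw_def fg)
  have c5: "kb f g 5 = 0" if "kw 5 < a + b"
    using that by (simp add: kb_def wd_def kw_def fg)
  have c6: "kb f g 6 = 0" if "kw 6 < a + b"
    using that by (simp add: kb_def wd_def kw_def fg)
  have c7: "kb f g 7 = 0" if "kw 7 < a + b"
    using that by (simp add: kb_def wd_def kw_def fg)
  show ?thesis
  proof (cases "s \<in> {4,5,6,7}")
    case True then show ?thesis using s c4 c5 c6 c7 by auto
  next
    case False then show ?thesis by (auto simp: kb_def)
  qed
qed



lemma cpt_SS:
  assumes "u \<in> SS N a" "k < N"
  shows "kw p < a \<Longrightarrow> cpt k u p = 0"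
proof -
  assume p: "kw p < a"
  show "cpt k u p = 0"
  proof (cases "p < 8")
    case True
    have "8*k+p < 8*N" using assms(2) True by linarith
    moreover have "(8*k+p) mod 8 = p" using True by simp
    ultimately have "wt N (8*k+p) = kw p" by (simp add: wt_def)
    then show ?thesis using assms(1) p True by (simp add: SS_def cpt_def)
  qed (simp add: cpt_def)
qed

lemma hb_SS:
  assumes u: "u \<in> SS N a" and v: "v \<in> SS N b"
  shows "hb N u v \<in> SS N (a + b)"
proof -
  have "hb N u v x = 0" if x: "wt N x < a + b" for x
  proof (cases "x < 8*N")
    case True
    define k where "k = x div 8"
    define s where "s = x mod 8"
    have k: "k < N" using True by (simp add: k_def)
    have "hb N u v x = kb (cpt k u) (cpt k v) s" using True by (simp add: hb_def k_def s_def)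
    also have "\<dots> = 0"
      by (rule kb_filt[where a=a and b=b]) (use cpt_SS[OF u k] cpt_SS[OF v k] x True in \<open>auto simp: wt_def s_def\<close>)
    finally show ?thesis .
  next
    case False
    show ?thesis
    proof (cases "x \<in> Vd N")
      case True
      with False obtain i j where ij: "i < j" "j < N" "x = aidx N i j" by (auto simp: Vd_def)
      have w2: "2 < a + b" using x False by (simp add: wt_def)
      have wi: "wt N (8*i) = 1" "wt N (8*j) = 1" using ij by (auto simp: wt_def kw_def)
      have "u (8*i) = 0 \<and> u (8*j) = 0 \<or> v (8*i) = 0 \<and> v (8*j) = 0"
      proof (cases "a \<ge> 2")
        case True then show ?thesis using u wi by (auto simp: SS_def)
      next
        case False then have "b \<ge> 2" using w2 by linarith
        then show ?thesis using v wi by (auto simp: SS_def)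
      qed
      then show ?thesis using ij by (auto simp: hb_aidx)
    next
      case False then show ?thesis using hb_in_LL[of N u v] by (simp add: LL_def)
    qed
  qed
  then show ?thesis using hb_in_LL by (simp add: SS_def)
qed

lemma lcs_SS: "lcs (LL N) (hb N) r \<subseteq> SS N (Suc r)"
proof (induction r)
  case 0 then show ?case using SS_1[of N, unfolded One_nat_def] by simp
next
  case (Suc r)
  have "{hb N x y | x y. x \<in> LL N \<and> y \<in> lcs (LL N) (hb N) r} \<subseteq> SS N (Suc (Suc r))"
  proof clarify
    fix x y assume "x \<in> LL N" "y \<in> lcs (LL N) (hb N) r"
    then have "x \<in> SS N 1" "y \<in> SS N (Suc r)" using Suc SS_1 by auto
    from hb_SS[OF this] show "hb N x y \<in> SS N (Suc (Suc r))" by simp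
  qed
  then show ?case by (simp add: V.span_minimal SS_subspace)
qed

lemma nilpotent_LL: "nilpotent_lie (LL N) (hb N)"
proof -
  have "lcs (LL N) (hb N) 3 \<subseteq> {0}" using lcs_SS[of N 3] SS_4 by (simp add: numeral_eq_Suc)
  moreover have "0 \<in> lcs (LL N) (hb N) 3" by (simp add: numeral_eq_Suc V.span_zero)
  ultimately show ?thesis unfolding nilpotent_lie_def by blast
qed

definition lin_on :: "nat \<Rightarrow> (vec \<Rightarrow> vec) \<Rightarrow> bool" where
  "lin_on N f \<longleftrightarrow> (\<forall>x\<in>LL N. \<forall>y\<in>LL N. f (x + y) = f x + f y) \<and> (\<forall>x\<in>LL N. \<forall>c. f (scl c x) = scl c (f x))"

lemma lin_sum:
  assumes "lin_on N f" "finite X" "\<And>x. x \<in> X \<Longrightarrow> g x \<in> LL N"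
  shows "f (sum g X) = (\<Sum>x\<in>X. f (g x))"
  using assms(2,3)
proof (induction X rule: finite_induct)
  case empty
  have z: "(0::vec) \<in> LL N" by (simp add: LL_def)
  have "f 0 = f (scl 0 0)" by (simp add: scl_def fun_eq_iff zero_fun_def)
  also have "\<dots> = scl 0 (f 0)" using assms(1) z unfolding lin_on_def by blast
  also have "\<dots> = 0" by (simp add: fun_eq_iff)
  finally show ?case by (simp only: sum.empty)
next
  case (insert a X)
  have s: "sum g X \<in> LL N" using insert by (intro V.subspace_sum[OF LL_subspace]) auto
  have ga: "g a \<in> LL N" using insert by simp
  have "f (sum g (insert a X)) = f (g a + sum g X)" using sum.insert[OF insert(1,2), of g] by (rule arg_cong)
  also have "\<dots> = f (g a) + f (sum g X)" using assms(1) s ga unfolding lin_on_def by blast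
  also have "\<dots> = f (g a) + (\<Sum>x\<in>X. f (g x))" using insert by simp
  also have "\<dots> = (\<Sum>x\<in>insert a X. f (g x))" using sum.insert[OF insert(1,2), of "\<lambda>x. f (g x)"] by (rule sym)
  finally show ?case .
qed

lemma lin_zero: "lin_on N f \<Longrightarrow> f 0 = 0"
  using lin_sum[of N f "{}"] by simp

lemma lin_scl: "lin_on N f \<Longrightarrow> x \<in> LL N \<Longrightarrow> f (scl c x) = scl c (f x)"
  by (simp add: lin_on_def)
lemma lin_add: "lin_on N f \<Longrightarrow> x \<in> LL N \<Longrightarrow> y \<in> LL N \<Longrightarrow> f (x + y) = f x + f y"
  by (simp add: lin_on_def)
lemma lin_neg: "lin_on N f \<Longrightarrow> x \<in> LL N \<Longrightarrow> f (- x) = - f x"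
  using lin_scl[of N f x "-1"] by (simp add: scl_neg)
lemma lin_diff: "lin_on N f \<Longrightarrow> x \<in> LL N \<Longrightarrow> y \<in> LL N \<Longrightarrow> f (x - y) = f x - f y"
proof -
  assume a: "lin_on N f" "x \<in> LL N" "y \<in> LL N"
  have "- y \<in> LL N" using a(3) LL_subspace V.subspace_neg by blast
  then show ?thesis using a lin_add[of N f x "- y"] lin_neg[of N f y] by simp
qed

lemma lin_into:
  assumes f: "lin_on N f" and S: "V.subspace S" and v: "v \<in> LL N"
    and b: "\<And>x. x \<in> Vd N \<Longrightarrow> v x \<noteq> 0 \<Longrightarrow> f (ev x) \<in> S"
  shows "f v \<in> S"
proof -
  have "v = (\<Sum>x\<in>Vd N. scl (v x) (ev x))"
    by (rule expand_vec) (use v in \<open>auto simp: Vd_finite LL_def\<close>)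
  then have "f v = (\<Sum>x\<in>Vd N. f (scl (v x) (ev x)))"
    using lin_sum[OF f Vd_finite, where g="\<lambda>x. scl (v x) (ev x)"] ev_in_LL LL_subspace V.subspace_scale by metis
  also have "\<dots> = (\<Sum>x\<in>Vd N. scl (v x) (f (ev x)))"
    by (rule sum.cong) (auto intro!: lin_scl[OF f] ev_in_LL)
  also have "\<dots> \<in> S"
  proof (rule V.subspace_sum[OF S])
    fix x assume x: "x \<in> Vd N"
    show "scl (v x) (f (ev x)) \<in> S"
    proof (cases "v x = 0")
      case True
      have "scl 0 (f (ev x)) = 0" by (simp add: fun_eq_iff)
      then show ?thesis using True V.subspace_0[OF S] by simp
    next
      case False then show ?thesis using b[OF x] V.subspace_scale[OF S] by blast
    qed
  qed
  finally show ?thesis .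
qed

lemma lin_filt:
  assumes f: "lin_on N f" and b: "\<And>x. x \<in> Vd N \<Longrightarrow> f (ev x) \<in> SS N (wt N x + d)"
    and v: "v \<in> SS N r"
  shows "f v \<in> SS N (r + d)"
proof (rule lin_into[OF f SS_subspace])
  show "v \<in> LL N" using v by (simp add: SS_def)
  fix x assume x: "x \<in> Vd N" "v x \<noteq> 0"
  then have "wt N x \<ge> r" using v by (auto simp: SS_def) (meson not_le)
  then show "f (ev x) \<in> SS N (r + d)" using b[OF x(1)] SS_mono[of "r + d" "wt N x + d" N] by auto
qed



lemma sum8: "(\<Sum>r<(8::nat). f r) = f 0 + f 1 + f 2 + f 3 + f 4 + f 5 + f 6 + (f 7 :: 'a::comm_monoid_add)"
  by (simp add: numeral_eq_Suc ac_simps)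

lemma scl_0 [simp]: "scl 0 v = 0" by (simp add: fun_eq_iff)
lemma scl_1 [simp]: "scl 1 v = v" by (simp add: fun_eq_iff)
lemma scl_m1 [simp]: "scl (-1) v = - v" by (simp add: fun_eq_iff)
lemma scl_zero [simp]: "scl c 0 = 0" by (simp add: fun_eq_iff)

lemma cpt_ev_same: "p < 8 \<Longrightarrow> cpt i (ev (8*i+p)) = ev p"
  by (auto simp: cpt_def ev_def fun_eq_iff)
lemma cpt_ev_other: "k \<noteq> i \<Longrightarrow> p < 8 \<Longrightarrow> cpt k (ev (8*i+p)) = 0"
  by (auto simp: cpt_def ev_def fun_eq_iff)
lemma cpt_ev_aidx: "k < N \<Longrightarrow> cpt k (ev (aidx N i j)) = 0"
  by (auto simp: cpt_def ev_def fun_eq_iff aidx_def)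
lemma cpt_add: "cpt k (u + v) = cpt k u + cpt k v" by (auto simp: cpt_def fun_eq_iff)
lemma cpt_scl: "cpt k (scl c u) = scl c (cpt k u)" by (auto simp: cpt_def fun_eq_iff)
lemma cpt_zero [simp]: "cpt k 0 = 0" by (auto simp: cpt_def fun_eq_iff)
lemma cpt_sum: "cpt k (sum g X) = (\<Sum>x\<in>X. cpt k (g x))"
  by (auto simp: cpt_def fun_eq_iff sum_vec_apply)
lemma kb_zero1 [simp]: "kb 0 g = 0" by (simp add: kb_def wd_def fun_eq_iff)
lemma kb_zero2 [simp]: "kb f 0 = 0" by (simp add: kb_def wd_def fun_eq_iff)
lemma at8: "i < N \<Longrightarrow> z (8*i) = cpt i z 0" by (simp add: cpt_def)

lemma ev_cpt_in_Vd: "i < N \<Longrightarrow> p < 8 \<Longrightarrow> 8*i+p \<in> Vd N"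
  by (simp add: Vd_def)
lemma aidx_in_Vd: "i < j \<Longrightarrow> j < N \<Longrightarrow> aidx N i j \<in> Vd N"
  by (auto simp: Vd_def)

lemma aidx_inj: "j < N \<Longrightarrow> j' < N \<Longrightarrow> aidx N i j = aidx N i' j' \<longleftrightarrow> i = i' \<and> j = j'"
  using aidx_parts by (metis aidx_def)

lemma hb_same:
  assumes i: "i < N" and p: "p < 8" and q: "q < 8"
  shows "hb N (ev (8*i+p)) (ev (8*i+q)) = (\<Sum>r<8. scl (kb (ev p) (ev q) r) (ev (8*i+r)))"
proof (rule vec_eqI[of _ N])
  show "hb N (ev (8*i+p)) (ev (8*i+q)) \<in> LL N" by (rule hb_in_LL)
  show "(\<Sum>r<8. scl (kb (ev p) (ev q) r) (ev (8*i+r))) \<in> LL N"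
    by (intro V.subspace_sum[OF LL_subspace] V.subspace_scale[OF LL_subspace] ev_in_LL ev_cpt_in_Vd i) auto
  fix k assume k: "k < N"
  show "cpt k (hb N (ev (8*i+p)) (ev (8*i+q))) = cpt k (\<Sum>r<8. scl (kb (ev p) (ev q) r) (ev (8*i+r)))"
  proof (cases "k = i")
    case True
    have "kb (ev p) (ev q) = (\<Sum>r<8. scl (kb (ev p) (ev q) r) (ev r))"
      by (rule expand_vec) (auto simp: kb_low)
    then show ?thesis using True k p q
      by (simp add: cpt_hb cpt_sum cpt_scl cpt_ev_same)
  next
    case False
    then show ?thesis using k p q by (simp add: cpt_hb cpt_sum cpt_scl cpt_ev_other)
  qed
next
  fix i' j' assume ij: "i' < j'" "j' < N"
  have z: "ev (8*i+p) (8*i') * ev (8*i+q) (8*j') = 0" "ev (8*i+q) (8*i') * ev (8*i+p) (8*j') = 0"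
    using ij p q by (auto simp: ev_def)
  have a: "ev (8*i+r) (aidx N i' j') = 0" if "r < 8" for r
    using i that by (auto simp: ev_def aidx_def)
  show "hb N (ev (8*i+p)) (ev (8*i+q)) (aidx N i' j') = (\<Sum>r<8. scl (kb (ev p) (ev q) r) (ev (8*i+r))) (aidx N i' j')"
  proof -
    have "(\<Sum>r<8. scl (kb (ev p) (ev q) r) (ev (8*i+r))) (aidx N i' j') = 0"
      unfolding sum_vec_apply by (rule sum.neutral) (simp add: a)
    then show ?thesis by (simp only: hb_aidx[OF ij] z) simp
  qed
qed

lemma hb_cross_aidx:
  assumes "i < j" "j < N"
  shows "hb N (ev (8*i)) (ev (8*j)) = ev (aidx N i j)"
proof (rule vec_eqI[of _ N])
  show "hb N (ev (8*i)) (ev (8*j)) \<in> LL N" by (rule hb_in_LL)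
  show "ev (aidx N i j) \<in> LL N" using assms by (intro ev_in_LL aidx_in_Vd)
  fix k assume k: "k < N"
  have "cpt k (ev (8*i)) = 0 \<or> cpt k (ev (8*j)) = 0"
    using cpt_ev_other[of k i 0] cpt_ev_other[of k j 0] assms by auto
  then show "cpt k (hb N (ev (8*i)) (ev (8*j))) = cpt k (ev (aidx N i j))"
    using k by (auto simp: cpt_hb cpt_ev_aidx)
next
  fix i' j' assume ij: "i' < j'" "j' < N"
  show "hb N (ev (8*i)) (ev (8*j)) (aidx N i' j') = ev (aidx N i j) (aidx N i' j')"
    using ij assms aidx_inj[of j N j' i i'] by (auto simp: hb_aidx ev_def)
qed

lemma ev_SS: "x \<in> Vd N \<Longrightarrow> ev x \<in> SS N (wt N x)"
  by (auto simp: SS_def ev_in_LL) (auto simp: ev_def)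

lemma center_cpt:
  assumes "z \<in> center (LL N) (hb N)" "k < N" "r < 8"
  shows "kb (cpt k z) (ev r) = 0"
proof -
  have "hb N z (ev (8*k+r)) = 0" using assms ev_in_LL[OF ev_cpt_in_Vd] by (auto simp: center_def)
  then have "cpt k (hb N z (ev (8*k+r))) = 0" by simp
  then show ?thesis using assms by (simp add: cpt_hb cpt_ev_same)
qed

lemma cpt0_center:
  assumes "z \<in> LL N" "\<And>k. k < N \<Longrightarrow> cpt k z = 0"
  shows "z \<in> center (LL N) (hb N)"
proof -
  have "hb N z y = 0" for y
  proof (rule vec_eqI[of _ N])
    show "hb N z y \<in> LL N" by (rule hb_in_LL)
    show "0 \<in> LL N" by (simp add: LL_def)
    fix k assume "k < N" then show "cpt k (hb N z y) = cpt k 0" using assms by (simp add: cpt_hb)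
  next
    fix i j assume ij: "i < j" "j < N"
    then show "hb N z y (aidx N i j) = 0 (aidx N i j)"
      using assms(2)[of i] assms(2)[of j] at8[of i N z] at8[of j N z] by (simp add: hb_aidx)
  qed
  then show ?thesis using assms by (simp add: center_def)
qed

lemma cross_center:
  assumes "i < N" "j < N" "i \<noteq> j" "p < 8" "q < 8"
  shows "hb N (ev (8*i+p)) (ev (8*j+q)) \<in> center (LL N) (hb N)"
proof (rule cpt0_center[OF hb_in_LL])
  fix k assume k: "k < N"
  have "cpt k (ev (8*i+p)) = 0 \<or> cpt k (ev (8*j+q)) = 0"
    using cpt_ev_other[of k i p] cpt_ev_other[of k j q] assms by auto
  then show "cpt k (hb N (ev (8*i+p)) (ev (8*j+q))) = 0" using k by (auto simp: cpt_hb)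
qed

lemma kZ2:
  assumes H: "\<And>q r. q < 8 \<Longrightarrow> r < 8 \<Longrightarrow> kb (kb u (ev q)) (ev r) = 0" and g: "g < 4"
  shows "u g = 0"
proof -
  have "u 0 = 0" using fun_cong[OF H[of 1 0], of 7] by (simp add: kb_def wd_def ev_def)
  moreover have "u 1 = 0" using fun_cong[OF H[of 0 0], of 7] by (simp add: kb_def wd_def ev_def)
  moreover have "u 2 = 0" using fun_cong[OF H[of 0 1], of 6] by (simp add: kb_def wd_def ev_def)
  moreover have "u 3 = 0" using fun_cong[OF H[of 1 1], of 6] by (simp add: kb_def wd_def ev_def)
  moreover have "g \<in> {0,1,2,3}" using g by auto
  ultimately show ?thesis by auto
qed

lemma offdiag_core:
  assumes "\<And>q. q < 8 \<Longrightarrow> F q \<in> center (LL N) (hb N)" "\<And>q. q < 8 \<Longrightarrow> cpt j (F q) = kb u (ev q)"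
    "j < N" "g < 4"
  shows "u g = 0"
proof (rule kZ2[OF _ assms(4)])
  fix q r :: nat assume "q < 8" "r < 8"
  then show "kb (kb u (ev q)) (ev r) = 0"
    using center_cpt[OF assms(1) assms(3), of q r] assms(2)[of q] by simp
qed



lemma kP:
  fixes d :: "nat \<Rightarrow> vec"
  assumes H: "\<And>p q. p < 8 \<Longrightarrow> q < 8 \<Longrightarrow> (\<Sum>r<8. scl (kb (ev p) (ev q) r) (d r)) = kb (d p) (ev q) + kb (ev p) (d q)"
  shows "p < 4 \<Longrightarrow> g < 4 \<Longrightarrow> d p g = 0"
proof -
  have H_1_0: "(\<Sum>r<8. scl (kb (ev 1) (ev 0) r) (d r)) = kb (d 1) (ev 0) + kb (ev 1) (d 0)" using H[of 1 0] by simp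
  have H_2_0: "(\<Sum>r<8. scl (kb (ev 2) (ev 0) r) (d r)) = kb (d 2) (ev 0) + kb (ev 2) (d 0)" using H[of 2 0] by simp
  have H_2_1: "(\<Sum>r<8. scl (kb (ev 2) (ev 1) r) (d r)) = kb (d 2) (ev 1) + kb (ev 2) (d 1)" using H[of 2 1] by simp
  have H_3_0: "(\<Sum>r<8. scl (kb (ev 3) (ev 0) r) (d r)) = kb (d 3) (ev 0) + kb (ev 3) (d 0)" using H[of 3 0] by simp
  have H_3_1: "(\<Sum>r<8. scl (kb (ev 3) (ev 1) r) (d r)) = kb (d 3) (ev 1) + kb (ev 3) (d 1)" using H[of 3 1] by simp
  have H_3_2: "(\<Sum>r<8. scl (kb (ev 3) (ev 2) r) (d r)) = kb (d 3) (ev 2) + kb (ev 3) (d 2)" using H[of 3 2] by simp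
  have H_4_0: "(\<Sum>r<8. scl (kb (ev 4) (ev 0) r) (d r)) = kb (d 4) (ev 0) + kb (ev 4) (d 0)" using H[of 4 0] by simp
  have H_4_1: "(\<Sum>r<8. scl (kb (ev 4) (ev 1) r) (d r)) = kb (d 4) (ev 1) + kb (ev 4) (d 1)" using H[of 4 1] by simp
  have H_4_2: "(\<Sum>r<8. scl (kb (ev 4) (ev 2) r) (d r)) = kb (d 4) (ev 2) + kb (ev 4) (d 2)" using H[of 4 2] by simp
  have H_4_3: "(\<Sum>r<8. scl (kb (ev 4) (ev 3) r) (d r)) = kb (d 4) (ev 3) + kb (ev 4) (d 3)" using H[of 4 3] by simp
  have H_5_0: "(\<Sum>r<8. scl (kb (ev 5) (ev 0) r) (d r)) = kb (d 5) (ev 0) + kb (ev 5) (d 0)" using H[of 5 0] by simp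
  have H_5_1: "(\<Sum>r<8. scl (kb (ev 5) (ev 1) r) (d r)) = kb (d 5) (ev 1) + kb (ev 5) (d 1)" using H[of 5 1] by simp
  have H_5_2: "(\<Sum>r<8. scl (kb (ev 5) (ev 2) r) (d r)) = kb (d 5) (ev 2) + kb (ev 5) (d 2)" using H[of 5 2] by simp
  have H_5_3: "(\<Sum>r<8. scl (kb (ev 5) (ev 3) r) (d r)) = kb (d 5) (ev 3) + kb (ev 5) (d 3)" using H[of 5 3] by simp
  note E_1_0_6 = fun_cong[OF H_1_0, of 6, unfolded sum_vec_apply sum8 plus_fun_apply scl_apply kb_def wd_def ev_def, simplified]
  note E_1_0_7 = fun_cong[OF H_1_0, of 7, unfolded sum_vec_apply sum8 plus_fun_apply scl_apply kb_def wd_def ev_def, simplified]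
  note E_2_0_4 = fun_cong[OF H_2_0, of 4, unfolded sum_vec_apply sum8 plus_fun_apply scl_apply kb_def wd_def ev_def, simplified]
  note E_2_1_6 = fun_cong[OF H_2_1, of 6, unfolded sum_vec_apply sum8 plus_fun_apply scl_apply kb_def wd_def ev_def, simplified]
  note E_2_1_7 = fun_cong[OF H_2_1, of 7, unfolded sum_vec_apply sum8 plus_fun_apply scl_apply kb_def wd_def ev_def, simplified]
  note E_3_0_6 = fun_cong[OF H_3_0, of 6, unfolded sum_vec_apply sum8 plus_fun_apply scl_apply kb_def wd_def ev_def, simplified]
  note E_3_0_7 = fun_cong[OF H_3_0, of 7, unfolded sum_vec_apply sum8 plus_fun_apply scl_apply kb_def wd_def ev_def, simplified]
  note E_3_1_5 = fun_cong[OF H_3_1, of 5, unfolded sum_vec_apply sum8 plus_fun_apply scl_apply kb_def wd_def ev_def, simplified]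
  note E_3_2_4 = fun_cong[OF H_3_2, of 4, unfolded sum_vec_apply sum8 plus_fun_apply scl_apply kb_def wd_def ev_def, simplified]
  note E_3_2_5 = fun_cong[OF H_3_2, of 5, unfolded sum_vec_apply sum8 plus_fun_apply scl_apply kb_def wd_def ev_def, simplified]
  note E_3_2_6 = fun_cong[OF H_3_2, of 6, unfolded sum_vec_apply sum8 plus_fun_apply scl_apply kb_def wd_def ev_def, simplified]
  note E_3_2_7 = fun_cong[OF H_3_2, of 7, unfolded sum_vec_apply sum8 plus_fun_apply scl_apply kb_def wd_def ev_def, simplified]
  note E_4_0_6 = fun_cong[OF H_4_0, of 6, unfolded sum_vec_apply sum8 plus_fun_apply scl_apply kb_def wd_def ev_def, simplified]
  note E_4_0_7 = fun_cong[OF H_4_0, of 7, unfolded sum_vec_apply sum8 plus_fun_apply scl_apply kb_def wd_def ev_def, simplified]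
  note E_4_1_4 = fun_cong[OF H_4_1, of 4, unfolded sum_vec_apply sum8 plus_fun_apply scl_apply kb_def wd_def ev_def, simplified]
  note E_4_1_5 = fun_cong[OF H_4_1, of 5, unfolded sum_vec_apply sum8 plus_fun_apply scl_apply kb_def wd_def ev_def, simplified]
  note E_4_1_6 = fun_cong[OF H_4_1, of 6, unfolded sum_vec_apply sum8 plus_fun_apply scl_apply kb_def wd_def ev_def, simplified]
  note E_4_1_7 = fun_cong[OF H_4_1, of 7, unfolded sum_vec_apply sum8 plus_fun_apply scl_apply kb_def wd_def ev_def, simplified]
  note E_4_2_6 = fun_cong[OF H_4_2, of 6, unfolded sum_vec_apply sum8 plus_fun_apply scl_apply kb_def wd_def ev_def, simplified]
  note E_4_2_7 = fun_cong[OF H_4_2, of 7, unfolded sum_vec_apply sum8 plus_fun_apply scl_apply kb_def wd_def ev_def, simplified]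
  note E_4_3_4 = fun_cong[OF H_4_3, of 4, unfolded sum_vec_apply sum8 plus_fun_apply scl_apply kb_def wd_def ev_def, simplified]
  note E_4_3_5 = fun_cong[OF H_4_3, of 5, unfolded sum_vec_apply sum8 plus_fun_apply scl_apply kb_def wd_def ev_def, simplified]
  note E_4_3_6 = fun_cong[OF H_4_3, of 6, unfolded sum_vec_apply sum8 plus_fun_apply scl_apply kb_def wd_def ev_def, simplified]
  note E_4_3_7 = fun_cong[OF H_4_3, of 7, unfolded sum_vec_apply sum8 plus_fun_apply scl_apply kb_def wd_def ev_def, simplified]
  note E_5_0_4 = fun_cong[OF H_5_0, of 4, unfolded sum_vec_apply sum8 plus_fun_apply scl_apply kb_def wd_def ev_def, simplified]
  note E_5_0_5 = fun_cong[OF H_5_0, of 5, unfolded sum_vec_apply sum8 plus_fun_apply scl_apply kb_def wd_def ev_def, simplified]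
  note E_5_0_6 = fun_cong[OF H_5_0, of 6, unfolded sum_vec_apply sum8 plus_fun_apply scl_apply kb_def wd_def ev_def, simplified]
  note E_5_0_7 = fun_cong[OF H_5_0, of 7, unfolded sum_vec_apply sum8 plus_fun_apply scl_apply kb_def wd_def ev_def, simplified]
  note E_5_1_6 = fun_cong[OF H_5_1, of 6, unfolded sum_vec_apply sum8 plus_fun_apply scl_apply kb_def wd_def ev_def, simplified]
  note E_5_1_7 = fun_cong[OF H_5_1, of 7, unfolded sum_vec_apply sum8 plus_fun_apply scl_apply kb_def wd_def ev_def, simplified]
  note E_5_2_4 = fun_cong[OF H_5_2, of 4, unfolded sum_vec_apply sum8 plus_fun_apply scl_apply kb_def wd_def ev_def, simplified]
  note E_5_2_5 = fun_cong[OF H_5_2, of 5, unfolded sum_vec_apply sum8 plus_fun_apply scl_apply kb_def wd_def ev_def, simplified]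
  note E_5_2_6 = fun_cong[OF H_5_2, of 6, unfolded sum_vec_apply sum8 plus_fun_apply scl_apply kb_def wd_def ev_def, simplified]
  note E_5_2_7 = fun_cong[OF H_5_2, of 7, unfolded sum_vec_apply sum8 plus_fun_apply scl_apply kb_def wd_def ev_def, simplified]
  note E_5_3_6 = fun_cong[OF H_5_3, of 6, unfolded sum_vec_apply sum8 plus_fun_apply scl_apply kb_def wd_def ev_def, simplified]
  note E_5_3_7 = fun_cong[OF H_5_3, of 7, unfolded sum_vec_apply sum8 plus_fun_apply scl_apply kb_def wd_def ev_def, simplified]
  have T_0_0: "d 0 0 = 0" using E_2_1_7 E_3_0_6 E_3_2_4 E_4_0_7 E_4_2_6 E_5_1_6 E_5_3_7 unfolding One_nat_def by ((simp; fail) | algebra)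
  have T_0_1: "d 0 1 = 0" using E_5_0_6 E_5_2_4 unfolding One_nat_def by ((simp; fail) | algebra)
  have T_0_2: "d 0 2 = 0" using E_1_0_7 E_2_1_6 E_3_2_7 E_4_0_6 E_5_3_6 E_4_1_5 E_5_2_5 unfolding One_nat_def by ((simp; fail) | algebra)
  have T_0_3: "d 0 3 = 0" using E_2_0_4 E_5_0_7 E_5_2_6 unfolding One_nat_def by ((simp; fail) | algebra)
  have T_1_0: "d 1 0 = 0" using E_4_1_7 E_4_3_4 unfolding One_nat_def by ((simp; fail) | algebra)
  have T_1_1: "d 1 1 = 0" using E_2_1_7 E_3_0_6 E_3_1_5 E_3_2_4 E_4_0_7 E_4_2_6 E_5_1_6 E_5_3_7 unfolding One_nat_def by ((simp; fail) | algebra)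
  have T_1_2: "d 1 2 = 0" using E_2_0_4 E_3_2_5 E_4_1_6 E_4_3_7 E_5_0_7 E_5_2_6 unfolding One_nat_def by ((simp; fail) | algebra)
  have T_1_3: "d 1 3 = 0" using E_1_0_6 E_3_0_7 E_3_2_6 E_4_2_7 E_5_1_7 E_4_3_5 E_5_0_5 unfolding One_nat_def by ((simp; fail) | algebra)
  have T_2_0: "d 2 0 = 0" using E_1_0_6 E_3_0_7 E_3_2_6 E_4_2_7 E_5_1_7 E_4_3_5 E_5_0_5 unfolding One_nat_def by ((simp; fail) | algebra)
  have T_2_1: "d 2 1 = 0" using E_2_0_4 E_5_0_7 E_5_2_6 unfolding One_nat_def by ((simp; fail) | algebra)
  have T_2_2: "d 2 2 = 0" using E_2_1_7 E_3_0_6 E_3_2_4 E_4_0_7 E_4_2_6 E_5_1_6 E_5_3_7 unfolding One_nat_def by ((simp; fail) | algebra)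
  have T_2_3: "d 2 3 = 0" using E_5_2_7 E_5_0_4 unfolding One_nat_def by ((simp; fail) | algebra)
  have T_3_0: "d 3 0 = 0" using E_2_0_4 E_3_2_5 E_4_3_7 E_5_0_7 E_5_2_6 unfolding One_nat_def by ((simp; fail) | algebra)
  have T_3_1: "d 3 1 = 0" using E_1_0_7 E_2_1_6 E_3_2_7 E_4_0_6 E_5_3_6 E_4_1_5 E_5_2_5 unfolding One_nat_def by ((simp; fail) | algebra)
  have T_3_2: "d 3 2 = 0" using E_4_3_6 E_4_1_4 unfolding One_nat_def by ((simp; fail) | algebra)
  have T_3_3: "d 3 3 = 0" using E_2_1_7 E_3_0_6 E_3_1_5 E_3_2_4 E_4_0_7 E_4_2_6 E_5_1_6 E_5_3_7 unfolding One_nat_def by ((simp; fail) | algebra)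
  assume "p < 4" "g < 4"
  then have "p \<in> {0,1,2,3}" "g \<in> {0,1,2,3}" by auto
  then show ?thesis using T_0_0 T_0_1 T_0_2 T_0_3 T_1_0 T_1_1 T_1_2 T_1_3 T_2_0 T_2_1 T_2_2 T_2_3 T_3_0 T_3_1 T_3_2 T_3_3 by auto
qed

lemma kQ:
  fixes d :: "nat \<Rightarrow> vec"
  assumes H: "\<And>p q. p < 8 \<Longrightarrow> q < 8 \<Longrightarrow> (\<Sum>r<8. scl (kb (ev p) (ev q) r) (d r)) = kb (d p) (ev q)"
  shows "p < 4 \<Longrightarrow> g < 4 \<Longrightarrow> d p g = (if p = g then d 0 0 else 0)"
proof -
  have H_0_0: "(\<Sum>r<8. scl (kb (ev 0) (ev 0) r) (d r)) = kb (d 0) (ev 0)" using H[of 0 0] by simp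
  have H_0_4: "(\<Sum>r<8. scl (kb (ev 0) (ev 4) r) (d r)) = kb (d 0) (ev 4)" using H[of 0 4] by simp
  have H_0_5: "(\<Sum>r<8. scl (kb (ev 0) (ev 5) r) (d r)) = kb (d 0) (ev 5)" using H[of 0 5] by simp
  have H_1_1: "(\<Sum>r<8. scl (kb (ev 1) (ev 1) r) (d r)) = kb (d 1) (ev 1)" using H[of 1 1] by simp
  have H_1_4: "(\<Sum>r<8. scl (kb (ev 1) (ev 4) r) (d r)) = kb (d 1) (ev 4)" using H[of 1 4] by simp
  have H_1_5: "(\<Sum>r<8. scl (kb (ev 1) (ev 5) r) (d r)) = kb (d 1) (ev 5)" using H[of 1 5] by simp
  have H_2_2: "(\<Sum>r<8. scl (kb (ev 2) (ev 2) r) (d r)) = kb (d 2) (ev 2)" using H[of 2 2] by simp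
  have H_2_4: "(\<Sum>r<8. scl (kb (ev 2) (ev 4) r) (d r)) = kb (d 2) (ev 4)" using H[of 2 4] by simp
  have H_2_5: "(\<Sum>r<8. scl (kb (ev 2) (ev 5) r) (d r)) = kb (d 2) (ev 5)" using H[of 2 5] by simp
  have H_3_3: "(\<Sum>r<8. scl (kb (ev 3) (ev 3) r) (d r)) = kb (d 3) (ev 3)" using H[of 3 3] by simp
  have H_3_4: "(\<Sum>r<8. scl (kb (ev 3) (ev 4) r) (d r)) = kb (d 3) (ev 4)" using H[of 3 4] by simp
  have H_3_5: "(\<Sum>r<8. scl (kb (ev 3) (ev 5) r) (d r)) = kb (d 3) (ev 5)" using H[of 3 5] by simp
  have H_5_1: "(\<Sum>r<8. scl (kb (ev 5) (ev 1) r) (d r)) = kb (d 5) (ev 1)" using H[of 5 1] by simp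
  have H_5_3: "(\<Sum>r<8. scl (kb (ev 5) (ev 3) r) (d r)) = kb (d 5) (ev 3)" using H[of 5 3] by simp
  note E_0_0_5 = fun_cong[OF H_0_0, of 5, unfolded sum_vec_apply sum8 plus_fun_apply scl_apply kb_def wd_def ev_def, simplified]
  note E_0_4_7 = fun_cong[OF H_0_4, of 7, unfolded sum_vec_apply sum8 plus_fun_apply scl_apply kb_def wd_def ev_def, simplified]
  note E_0_5_6 = fun_cong[OF H_0_5, of 6, unfolded sum_vec_apply sum8 plus_fun_apply scl_apply kb_def wd_def ev_def, simplified]
  note E_0_5_7 = fun_cong[OF H_0_5, of 7, unfolded sum_vec_apply sum8 plus_fun_apply scl_apply kb_def wd_def ev_def, simplified]
  note E_1_1_5 = fun_cong[OF H_1_1, of 5, unfolded sum_vec_apply sum8 plus_fun_apply scl_apply kb_def wd_def ev_def, simplified]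
  note E_1_4_6 = fun_cong[OF H_1_4, of 6, unfolded sum_vec_apply sum8 plus_fun_apply scl_apply kb_def wd_def ev_def, simplified]
  note E_1_4_7 = fun_cong[OF H_1_4, of 7, unfolded sum_vec_apply sum8 plus_fun_apply scl_apply kb_def wd_def ev_def, simplified]
  note E_1_5_6 = fun_cong[OF H_1_5, of 6, unfolded sum_vec_apply sum8 plus_fun_apply scl_apply kb_def wd_def ev_def, simplified]
  note E_2_2_5 = fun_cong[OF H_2_2, of 5, unfolded sum_vec_apply sum8 plus_fun_apply scl_apply kb_def wd_def ev_def, simplified]
  note E_2_4_6 = fun_cong[OF H_2_4, of 6, unfolded sum_vec_apply sum8 plus_fun_apply scl_apply kb_def wd_def ev_def, simplified]
  note E_2_5_6 = fun_cong[OF H_2_5, of 6, unfolded sum_vec_apply sum8 plus_fun_apply scl_apply kb_def wd_def ev_def, simplified]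
  note E_2_5_7 = fun_cong[OF H_2_5, of 7, unfolded sum_vec_apply sum8 plus_fun_apply scl_apply kb_def wd_def ev_def, simplified]
  note E_3_3_5 = fun_cong[OF H_3_3, of 5, unfolded sum_vec_apply sum8 plus_fun_apply scl_apply kb_def wd_def ev_def, simplified]
  note E_3_4_6 = fun_cong[OF H_3_4, of 6, unfolded sum_vec_apply sum8 plus_fun_apply scl_apply kb_def wd_def ev_def, simplified]
  note E_3_4_7 = fun_cong[OF H_3_4, of 7, unfolded sum_vec_apply sum8 plus_fun_apply scl_apply kb_def wd_def ev_def, simplified]
  note E_3_5_7 = fun_cong[OF H_3_5, of 7, unfolded sum_vec_apply sum8 plus_fun_apply scl_apply kb_def wd_def ev_def, simplified]
  note E_5_1_6 = fun_cong[OF H_5_1, of 6, unfolded sum_vec_apply sum8 plus_fun_apply scl_apply kb_def wd_def ev_def, simplified]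
  note E_5_3_7 = fun_cong[OF H_5_3, of 7, unfolded sum_vec_apply sum8 plus_fun_apply scl_apply kb_def wd_def ev_def, simplified]
  have T_0_1: "d 0 1 = 0" using E_0_5_6 unfolding One_nat_def by ((simp; fail) | algebra)
  have T_0_2: "d 0 2 = 0" using E_0_0_5 unfolding One_nat_def by ((simp; fail) | algebra)
  have T_0_3: "d 0 3 = 0" using E_0_5_7 unfolding One_nat_def by ((simp; fail) | algebra)
  have T_1_0: "d 1 0 = 0" using E_1_4_7 unfolding One_nat_def by ((simp; fail) | algebra)
  have T_1_1: "d 1 1 = d 0 0" using E_0_4_7 E_1_5_6 E_5_1_6 E_5_3_7 unfolding One_nat_def by ((simp; fail) | algebra)
  have T_1_2: "d 1 2 = 0" using E_1_4_6 unfolding One_nat_def by ((simp; fail) | algebra)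
  have T_1_3: "d 1 3 = 0" using E_1_1_5 unfolding One_nat_def by ((simp; fail) | algebra)
  have T_2_0: "d 2 0 = 0" using E_2_2_5 unfolding One_nat_def by ((simp; fail) | algebra)
  have T_2_1: "d 2 1 = 0" using E_2_5_6 unfolding One_nat_def by ((simp; fail) | algebra)
  have T_2_2: "d 2 2 = d 0 0" using E_0_4_7 E_2_4_6 E_5_1_6 E_5_3_7 unfolding One_nat_def by ((simp; fail) | algebra)
  have T_2_3: "d 2 3 = 0" using E_2_5_7 unfolding One_nat_def by ((simp; fail) | algebra)
  have T_3_0: "d 3 0 = 0" using E_3_4_7 unfolding One_nat_def by ((simp; fail) | algebra)
  have T_3_1: "d 3 1 = 0" using E_3_3_5 unfolding One_nat_def by ((simp; fail) | algebra)
  have T_3_2: "d 3 2 = 0" using E_3_4_6 unfolding One_nat_def by ((simp; fail) | algebra)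
  have T_3_3: "d 3 3 = d 0 0" using E_0_4_7 E_3_5_7 unfolding One_nat_def by ((simp; fail) | algebra)
  assume "p < 4" "g < 4"
  then have "p \<in> {0,1,2,3}" "g \<in> {0,1,2,3}" by auto
  then show ?thesis using T_0_1 T_0_2 T_0_3 T_1_0 T_1_1 T_1_2 T_1_3 T_2_0 T_2_1 T_2_2 T_2_3 T_3_0 T_3_1 T_3_2 T_3_3 by auto
qed

abbreviation Der :: "nat \<Rightarrow> (vec \<Rightarrow> vec) set" where "Der N \<equiv> derivations (LL N) (hb N)"

lemma der_lin: "D \<in> Der N \<Longrightarrow> lin_on N D" by (simp add: derivations_def lin_on_def)
lemma der_LL: "D \<in> Der N \<Longrightarrow> x \<in> LL N \<Longrightarrow> D x \<in> LL N" by (simp add: derivations_def)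
lemma der_hb: "D \<in> Der N \<Longrightarrow> x \<in> LL N \<Longrightarrow> y \<in> LL N \<Longrightarrow> D (hb N x y) = hb N (D x) y + hb N x (D y)"
  by (simp add: derivations_def)

lemma der_center:
  assumes D: "D \<in> Der N" and z: "z \<in> center (LL N) (hb N)"
  shows "D z \<in> center (LL N) (hb N)"
proof -
  have zL: "z \<in> LL N" using z by (simp add: center_def)
  have "hb N (D z) y = 0" if y: "y \<in> LL N" for y
  proof -
    have "D (hb N z y) = hb N (D z) y + hb N z (D y)" using der_hb[OF D zL y] .
    moreover have "hb N z y = 0" using z y by (simp add: center_def)
    moreover have "hb N z (D y) = 0" using z der_LL[OF D y] by (simp add: center_def)
    moreover have "D 0 = 0" using lin_zero[OF der_lin[OF D]] .
    ultimately show ?thesis by simp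
  qed
  then show ?thesis using der_LL[OF D zL] by (simp add: center_def)
qed

lemma evL: "i < N \<Longrightarrow> r < 8 \<Longrightarrow> ev (8*i+r) \<in> LL N"
  by (intro ev_in_LL ev_cpt_in_Vd)

lemma der_diag:
  assumes D: "D \<in> Der N" and i: "i < N" and p: "p < 4" and g: "g < 4"
  shows "D (ev (8*i+p)) (8*i+g) = 0"
proof -
  define d where "d r = cpt i (D (ev (8*i+r)))" for r
  have H: "(\<Sum>r<8. scl (kb (ev a) (ev b) r) (d r)) = kb (d a) (ev b) + kb (ev a) (d b)"
    if ab: "a < 8" "b < 8" for a b
  proof -
    have "D (hb N (ev (8*i+a)) (ev (8*i+b))) = (\<Sum>r<8. D (scl (kb (ev a) (ev b) r) (ev (8*i+r))))"
      unfolding hb_same[OF i ab] by (rule lin_sum[OF der_lin[OF D]]) (auto intro!: V.subspace_scale[OF LL_subspace] evL i)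
    also have "\<dots> = (\<Sum>r<8. scl (kb (ev a) (ev b) r) (D (ev (8*i+r))))"
      by (rule sum.cong) (auto intro!: lin_scl[OF der_lin[OF D]] evL i)
    finally have "cpt i (D (hb N (ev (8*i+a)) (ev (8*i+b)))) = (\<Sum>r<8. scl (kb (ev a) (ev b) r) (d r))"
      by (simp add: cpt_sum cpt_scl d_def)
    moreover have "cpt i (D (hb N (ev (8*i+a)) (ev (8*i+b)))) = kb (d a) (ev b) + kb (ev a) (d b)"
      using der_hb[OF D evL[OF i ab(1)] evL[OF i ab(2)]] i ab by (simp add: cpt_add cpt_hb cpt_ev_same d_def)
    ultimately show ?thesis by simp
  qed
  have "d p g = 0" by (rule kP[OF H p g])
  then show ?thesis using g by (simp add: d_def cpt_def)
qed

lemma der_offdiag: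
  assumes D: "D \<in> Der N" and i: "i < N" and j: "j < N" and ij: "i \<noteq> j" and p: "p < 8" and g: "g < 4"
  shows "D (ev (8*i+p)) (8*j+g) = 0"
proof -
  define u where "u = cpt j (D (ev (8*i+p)))"
  have "u g = 0"
  proof (rule offdiag_core[where F = "\<lambda>q. D (hb N (ev (8*i+p)) (ev (8*j+q)))" and N = N and j = j])
    fix q :: nat assume q: "q < 8"
    show "D (hb N (ev (8*i+p)) (ev (8*j+q))) \<in> center (LL N) (hb N)"
      by (rule der_center[OF D cross_center[OF i j ij p q]])
    show "cpt j (D (hb N (ev (8*i+p)) (ev (8*j+q)))) = kb u (ev q)"
      using der_hb[OF D evL[OF i p] evL[OF j q]] j q p ij
      by (simp add: cpt_add cpt_hb cpt_ev_same cpt_ev_other u_def)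
  qed (use j g in auto)
  then show ?thesis using g by (simp add: u_def cpt_def)
qed

lemma wt_cpt: "i < N \<Longrightarrow> s < 8 \<Longrightarrow> wt N (8*i+s) = kw s"
proof -
  assume a: "i < N" "s < 8"
  then have "8*i+s < 8*N" by linarith
  then show ?thesis using a by (simp add: wt_def)
qed

lemma der_gen:
  assumes D: "D \<in> Der N" and i: "i < N" and p: "p < 4"
  shows "D (ev (8*i+p)) \<in> SS N 2"
proof -
  have "D (ev (8*i+p)) x = 0" if x: "wt N x < 2" for x
  proof -
    have x8: "x < 8*N" using x by (simp add: wt_def split: if_splits)
    define j where "j = x div 8"
    define s where "s = x mod 8"
    have xe: "x = 8*j+s" by (simp add: j_def s_def)
    have j: "j < N" using x8 by (simp add: j_def)
    have s: "s < 4" using x x8 by (simp add: wt_def kw_def s_def split: if_splits)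
    show ?thesis
    proof (cases "j = i")
      case True then show ?thesis using der_diag[OF D i p s] xe by simp
    next
      case False then show ?thesis using der_offdiag[OF D i j _ _ s] p xe by simp
    qed
  qed
  then show ?thesis using der_LL[OF D evL[OF i]] p by (simp add: SS_def)
qed

lemma hb_basis:
  assumes i: "i < N"
  shows "hb N (ev (8*i)) (ev (8*i+1)) = ev (8*i+4)" "hb N (ev (8*i)) (ev (8*i+2)) = ev (8*i+5)"
    "hb N (ev (8*i+5)) (ev (8*i+1)) = ev (8*i+6)" "hb N (ev (8*i+4)) (ev (8*i)) = ev (8*i+7)"
  using hb_same[OF i, of 0 1] hb_same[OF i, of 0 2] hb_same[OF i, of 5 1] hb_same[OF i, of 4 0]
  by (simp_all add: sum8 kb_def wd_def ev_def)

lemma der_pair: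
  assumes D: "D \<in> Der N" and a: "a \<in> SS N ra" "D a \<in> SS N (ra + 1)" and b: "b \<in> SS N rb" "D b \<in> SS N (rb + 1)"
  shows "D (hb N a b) \<in> SS N (ra + rb + 1)"
proof -
  have aL: "a \<in> LL N" and bL: "b \<in> LL N" using a b by (auto simp: SS_def)
  have "hb N (D a) b \<in> SS N (ra + 1 + rb)" by (rule hb_SS[OF a(2) b(1)])
  moreover have "hb N a (D b) \<in> SS N (ra + (rb + 1))" by (rule hb_SS[OF a(1) b(2)])
  ultimately show ?thesis using der_hb[OF D aL bL] SS_subspace V.subspace_add
    by (metis add.assoc add.commute)
qed

lemma der_basis:
  assumes D: "D \<in> Der N" and x: "x \<in> Vd N"
  shows "D (ev x) \<in> SS N (wt N x + 1)"
proof (cases "x < 8*N")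
  case True
  define i where "i = x div 8"
  define s where "s = x mod 8"
  have xe: "x = 8*i+s" by (simp add: i_def s_def)
  have i: "i < N" using True by (simp add: i_def)
  have s8: "s < 8" by (simp add: s_def)
  have g: "D (ev (8*i+p)) \<in> SS N (1 + 1)" if "p < 4" for p using der_gen[OF D i that] by (simp only: one_add_one)
  have e: "ev (8*i+p) \<in> SS N (kw p)" if "p < 8" for p
    using ev_SS[OF ev_cpt_in_Vd[OF i that]] wt_cpt[OF i that] by simp
  have e0: "ev (8*i) \<in> SS N 1" using e[of 0] by (simp add: kw_def)
  have e1: "ev (8*i+1) \<in> SS N 1" using e[of 1] by (simp add: kw_def)
  have e2: "ev (8*i+2) \<in> SS N 1" using e[of 2] by (simp add: kw_def)
  have e4: "ev (8*i+4) \<in> SS N 2" using e[of 4] by (simp add: kw_def)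
  have e5: "ev (8*i+5) \<in> SS N 2" using e[of 5] by (simp add: kw_def)
  have g0: "D (ev (8*i)) \<in> SS N (1 + 1)" using g[of 0] by simp
  have g1: "D (ev (8*i+1)) \<in> SS N (1 + 1)" using g[of 1] by simp
  have g2: "D (ev (8*i+2)) \<in> SS N (1 + 1)" using g[of 2] by simp
  have n4: "(2::nat) + 1 + 1 = 4" by simp
  have d4: "D (ev (8*i+4)) \<in> SS N (2 + 1)"
    using der_pair[OF D e0 g0 e1 g1] unfolding hb_basis(1)[OF i] by (simp only: one_add_one)
  have d5: "D (ev (8*i+5)) \<in> SS N (2 + 1)"
    using der_pair[OF D e0 g0 e2 g2] unfolding hb_basis(2)[OF i] by (simp only: one_add_one)
  have d6: "D (ev (8*i+6)) \<in> SS N 4"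
    using der_pair[OF D e5 d5 e1 g1] unfolding hb_basis(3)[OF i] by (simp only: n4)
  have d7: "D (ev (8*i+7)) \<in> SS N 4"
    using der_pair[OF D e4 d4 e0 g0] unfolding hb_basis(4)[OF i] by (simp only: n4)
  have w: "wt N x = kw s" using wt_cpt[OF i s8] xe by simp
  consider "s < 4" | "s = 4" | "s = 5" | "s = 6" | "s = 7" using s8 by linarith
  then show ?thesis
  proof cases
    case 1 then show ?thesis using g[OF 1] w xe by (simp add: kw_def)
  qed (use w xe d4 d5 d6 d7 in \<open>simp_all add: kw_def\<close>)
next
  case False
  then obtain i j where ij: "i < j" "j < N" "x = aidx N i j" using x by (auto simp: Vd_def)
  have i: "i < N" using ij by simp
  have e0: "ev (8*i) \<in> SS N 1" "ev (8*j) \<in> SS N 1"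
    using ev_SS[OF ev_cpt_in_Vd[OF i, of 0]] wt_cpt[OF i, of 0] ev_SS[OF ev_cpt_in_Vd[OF ij(2), of 0]] wt_cpt[OF ij(2), of 0]
    by (simp_all add: kw_def)
  have g0: "D (ev (8*i)) \<in> SS N (1 + 1)" "D (ev (8*j)) \<in> SS N (1 + 1)"
    using der_gen[OF D i, of 0] der_gen[OF D ij(2), of 0] by (simp_all only: one_add_one add_0_right)
  have "D (ev x) \<in> SS N (1 + 1 + 1)"
    using der_pair[OF D e0(1) g0(1) e0(2) g0(2)] unfolding hb_cross_aidx[OF ij(1,2)] ij(3) .
  moreover have "wt N x = 2" using False by (simp add: wt_def)
  moreover have "(1::nat) + 1 + 1 = 2 + 1" by simp
  ultimately show ?thesis by metis
qed

lemma der_filt: "D \<in> Der N \<Longrightarrow> v \<in> SS N r \<Longrightarrow> D v \<in> SS N (r + 1)"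
proof -
  assume a: "D \<in> Der N" "v \<in> SS N r"
  show ?thesis by (rule lin_filt[OF der_lin[OF a(1)] der_basis[OF a(1)] a(2)])
qed

lemma char_seq_SS: "char_seq (LL N) (hb N) r \<subseteq> SS N (Suc r)"
proof (induction r)
  case 0 then show ?case using SS_1[of N, unfolded One_nat_def] by simp
next
  case (Suc r)
  show ?case
  proof
    fix v assume "v \<in> char_seq (LL N) (hb N) (Suc r)"
    then obtain f y where "v = f y" "f \<in> Der N" "y \<in> char_seq (LL N) (hb N) r" by auto
    then show "v \<in> SS N (Suc (Suc r))" using der_filt[of f N y "Suc r"] Suc by auto
  qed
qed

lemma zero_der: "(\<lambda>_. 0) \<in> Der N"
  by (simp add: derivations_def LL_def)

lemma zero_char: "(0::vec) \<in> char_seq (LL N) (hb N) r"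
proof (induction r)
  case 0 then show ?case by (simp add: LL_def)
next
  case (Suc r)
  show ?case unfolding char_seq.simps
    by (rule CollectI, rule exI[of _ "\<lambda>_::vec. 0::vec"], rule exI[of _ "0::vec"], intro conjI refl zero_der Suc.IH)
qed

lemma char_nil: "char_nilpotent (LL N) (hb N)"
proof -
  have "char_seq (LL N) (hb N) 3 \<subseteq> SS N 4" using char_seq_SS[of N 3] by simp
  then have "char_seq (LL N) (hb N) 3 = {0}" using SS_4[of N] zero_char[of N 3] by blast
  then show ?thesis unfolding char_nilpotent_def using nilpotent_LL by (intro conjI exI[of _ 3]) auto
qed



definition compl :: "nat \<Rightarrow> vec set \<Rightarrow> vec set \<Rightarrow> bool" where
  "compl N I J \<longleftrightarrow> lie_ideal (LL N) (hb N) I \<and> lie_ideal (LL N) (hb N) J \<and> I \<inter> J = {0} \<and>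
     {a + b | a b. a \<in> I \<and> b \<in> J} = LL N"

definition proj :: "vec set \<Rightarrow> vec set \<Rightarrow> vec \<Rightarrow> vec" where
  "proj I J v = (SOME a. a \<in> I \<and> v - a \<in> J)"

lemma sum_set_comm: "{a + b | a b. a \<in> J \<and> b \<in> I} = {a + b | a b. a \<in> I \<and> b \<in> (J::vec set)}"
proof -
  have *: "x \<in> {a + b | a b. a \<in> I \<and> b \<in> J}" if h: "x \<in> {a + b | a b. a \<in> J \<and> b \<in> I}" for x :: vec and I J
  proof -
    obtain a b where ab: "a \<in> J" "b \<in> I" "x = a + b" using h by blast
    then have "x = b + a" by (simp add: add.commute)
    then show ?thesis using ab by blast
  qed
  show ?thesis using *[of _ I J] *[of _ J I] by blast
qed

lemma compl_sym: "compl N I J \<Longrightarrow> compl N J I"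
  unfolding compl_def using sum_set_comm[of J I] by (simp add: Int_commute)

lemma compl_sub: assumes "compl N I J"
  shows "V.subspace I" "V.subspace J" "I \<subseteq> LL N" "J \<subseteq> LL N"
  using assms by (auto simp: compl_def lie_ideal_def)

lemma compl_ideal: assumes "compl N I J" "x \<in> LL N" "y \<in> I" shows "hb N x y \<in> I"
  using assms by (auto simp: compl_def lie_ideal_def)

lemma compl_ideal': assumes "compl N I J" "x \<in> LL N" "y \<in> I" shows "hb N y x \<in> I"
proof -
  have "hb N x y \<in> I" by (rule compl_ideal[OF assms])
  then have "- hb N x y \<in> I" using compl_sub(1)[OF assms(1)] V.subspace_neg by blast
  then show ?thesis by (metis hb_anti)
qed

lemma proj_spec: assumes c: "compl N I J" and v: "v \<in> LL N"
  shows "proj I J v \<in> I" "v - proj I J v \<in> J"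
proof -
  have "v \<in> {a + b | a b. a \<in> I \<and> b \<in> J}" using c v by (simp add: compl_def)
  then obtain a b where ab: "a \<in> I" "b \<in> J" "v = a + b" by blast
  then have "\<exists>a. a \<in> I \<and> v - a \<in> J" by (intro exI[of _ a]) simp
  then have "proj I J v \<in> I \<and> v - proj I J v \<in> J" unfolding proj_def by (rule someI_ex)
  then show "proj I J v \<in> I" "v - proj I J v \<in> J" by auto
qed

lemma proj_unique: assumes c: "compl N I J" and v: "v \<in> LL N" and a: "a \<in> I" "v - a \<in> J"
  shows "proj I J v = a"
proof -
  have p: "proj I J v \<in> I" "v - proj I J v \<in> J" using proj_spec[OF c v] by auto
  have e: "a - proj I J v = (v - proj I J v) - (v - a)" by simp
  have j: "a - proj I J v \<in> J" unfolding e by (rule V.subspace_diff[OF compl_sub(2)[OF c] p(2) a(2)])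
  have i: "a - proj I J v \<in> I" by (rule V.subspace_diff[OF compl_sub(1)[OF c] a(1) p(1)])
  have "a - proj I J v = 0" using c i j unfolding compl_def by blast
  then show ?thesis by simp
qed

lemma proj_I: "compl N I J \<Longrightarrow> v \<in> I \<Longrightarrow> proj I J v = v"
  by (rule proj_unique) (auto simp: compl_sub V.subspace_0 dest: compl_sub(3))
lemma proj_J: "compl N I J \<Longrightarrow> v \<in> J \<Longrightarrow> proj I J v = 0"
  by (rule proj_unique) (auto simp: compl_sub V.subspace_0 dest: compl_sub(4))

lemma proj_LL: "compl N I J \<Longrightarrow> v \<in> LL N \<Longrightarrow> proj I J v \<in> LL N"
  using proj_spec compl_sub by blast

lemma proj_lin: assumes c: "compl N I J" shows "lin_on N (proj I J)"
  unfolding lin_on_def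
proof (intro conjI ballI allI)
  fix x y assume x: "x \<in> LL N" and y: "y \<in> LL N"
  have xy: "x + y \<in> LL N" using x y LL_subspace V.subspace_add by blast
  have i: "proj I J x + proj I J y \<in> I"
    by (rule V.subspace_add[OF compl_sub(1)[OF c] proj_spec(1)[OF c x] proj_spec(1)[OF c y]])
  have e: "(x + y) - (proj I J x + proj I J y) = (x - proj I J x) + (y - proj I J y)" by simp
  have j: "(x + y) - (proj I J x + proj I J y) \<in> J" unfolding e
    by (rule V.subspace_add[OF compl_sub(2)[OF c] proj_spec(2)[OF c x] proj_spec(2)[OF c y]])
  show "proj I J (x + y) = proj I J x + proj I J y" by (rule proj_unique[OF c xy i j])
next
  fix x c' assume x: "x \<in> LL N"
  have sx: "scl c' x \<in> LL N" using x LL_subspace V.subspace_scale by blast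
  have i: "scl c' (proj I J x) \<in> I" by (rule V.subspace_scale[OF compl_sub(1)[OF c] proj_spec(1)[OF c x]])
  have e: "scl c' x - scl c' (proj I J x) = scl c' (x - proj I J x)" by (simp add: fun_eq_iff algebra_simps)
  have j: "scl c' x - scl c' (proj I J x) \<in> J" unfolding e by (rule V.subspace_scale[OF compl_sub(2)[OF c] proj_spec(2)[OF c x]])
  show "proj I J (scl c' x) = scl c' (proj I J x)" by (rule proj_unique[OF c sx i j])
qed

lemma IJ_comm: assumes c: "compl N I J" and a: "a \<in> I" and b: "b \<in> J"
  shows "hb N a b = 0"
proof -
  have aL: "a \<in> LL N" and bL: "b \<in> LL N" using a b compl_sub[OF c] by auto
  have "hb N a b \<in> J" by (rule compl_ideal[OF compl_sym[OF c] aL b])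
  moreover have "hb N a b \<in> I" by (rule compl_ideal'[OF c bL a])
  ultimately show ?thesis using c by (auto simp: compl_def)
qed

lemma proj_hb1: assumes c: "compl N I J" and x: "x \<in> LL N" and y: "y \<in> LL N"
  shows "proj I J (hb N x y) = hb N (proj I J x) y"
proof (rule proj_unique[OF c hb_in_LL])
  show "hb N (proj I J x) y \<in> I" by (rule compl_ideal'[OF c y proj_spec(1)[OF c x]])
  have "hb N x y - hb N (proj I J x) y = hb N (x - proj I J x) y" by (simp add: hb_diff1)
  moreover have "hb N (x - proj I J x) y \<in> J" by (rule compl_ideal'[OF compl_sym[OF c] y proj_spec(2)[OF c x]])
  ultimately show "hb N x y - hb N (proj I J x) y \<in> J" by simp
qed

lemma proj_hom: assumes c: "compl N I J" and x: "x \<in> LL N" and y: "y \<in> LL N"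
  shows "proj I J (hb N x y) = hb N (proj I J x) (proj I J y)"
proof -
  have "y = proj I J y + (y - proj I J y)" by simp
  then have "hb N (proj I J x) y = hb N (proj I J x) (proj I J y) + hb N (proj I J x) (y - proj I J y)"
    by (metis hb_add2)
  moreover have "hb N (proj I J x) (y - proj I J y) = 0"
    by (rule IJ_comm[OF c proj_spec(1)[OF c x] proj_spec(2)[OF c y]])
  ultimately show ?thesis using proj_hb1[OF c x y] by simp
qed

lemma proj_hb2: assumes c: "compl N I J" and x: "x \<in> LL N" and y: "y \<in> LL N"
  shows "proj I J (hb N x y) = hb N x (proj I J y)"
proof -
  have "x = proj I J x + (x - proj I J x)" by simp
  then have "hb N x (proj I J y) = hb N (proj I J x) (proj I J y) + hb N (x - proj I J x) (proj I J y)"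
    by (metis hb_add1)
  moreover have "hb N (x - proj I J x) (proj I J y) = 0"
    using IJ_comm[OF compl_sym[OF c] proj_spec(2)[OF c x] proj_spec(1)[OF c y]] by simp
  ultimately show ?thesis using proj_hom[OF c x y] by simp
qed

lemma proj_center: assumes c: "compl N I J" and z: "z \<in> center (LL N) (hb N)"
  shows "proj I J z \<in> center (LL N) (hb N)"
proof -
  have zL: "z \<in> LL N" using z by (simp add: center_def)
  have "hb N (proj I J z) y = 0" if y: "y \<in> LL N" for y
    using proj_hb1[OF c zL y] z y lin_zero[OF proj_lin[OF c]] by (simp add: center_def)
  then show ?thesis using proj_LL[OF c zL] by (simp add: center_def)
qed



lemma cen_diag:
  assumes c: "compl N I J" and i: "i < N" and p: "p < 4" and g: "g < 4"
  shows "proj I J (ev (8*i+p)) (8*i+g) = (if p = g then proj I J (ev (8*i)) (8*i) else 0)"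
proof -
  define T where "T = proj I J"
  define d where "d r = cpt i (T (ev (8*i+r)))" for r
  have H: "(\<Sum>r<8. scl (kb (ev a) (ev b) r) (d r)) = kb (d a) (ev b)" if ab: "a < 8" "b < 8" for a b
  proof -
    have "T (hb N (ev (8*i+a)) (ev (8*i+b))) = (\<Sum>r<8. T (scl (kb (ev a) (ev b) r) (ev (8*i+r))))"
      unfolding hb_same[OF i ab] T_def by (rule lin_sum[OF proj_lin[OF c]]) (auto intro!: V.subspace_scale[OF LL_subspace] evL i)
    also have "\<dots> = (\<Sum>r<8. scl (kb (ev a) (ev b) r) (T (ev (8*i+r))))"
      unfolding T_def by (rule sum.cong) (auto intro!: lin_scl[OF proj_lin[OF c]] evL i)
    finally have "cpt i (T (hb N (ev (8*i+a)) (ev (8*i+b)))) = (\<Sum>r<8. scl (kb (ev a) (ev b) r) (d r))"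
      by (simp add: cpt_sum cpt_scl d_def)
    moreover have "cpt i (T (hb N (ev (8*i+a)) (ev (8*i+b)))) = kb (d a) (ev b)"
      using proj_hb1[OF c evL[OF i ab(1)] evL[OF i ab(2)]] i ab by (simp add: cpt_hb cpt_ev_same d_def T_def)
    ultimately show ?thesis by simp
  qed
  have "d p g = (if p = g then d 0 0 else 0)" by (rule kQ[OF H p g])
  then show ?thesis using g by (simp add: d_def cpt_def T_def)
qed

lemma cen_off:
  assumes c: "compl N I J" and i: "i < N" and j: "j < N" and ij: "i \<noteq> j" and p: "p < 8" and g: "g < 4"
  shows "proj I J (ev (8*i+p)) (8*j+g) = 0"
proof -
  define u where "u = cpt j (proj I J (ev (8*i+p)))"
  have "u g = 0"
  proof (rule offdiag_core[where F = "\<lambda>q. proj I J (hb N (ev (8*i+p)) (ev (8*j+q)))" and N = N and j = j])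
    fix q :: nat assume q: "q < 8"
    show "proj I J (hb N (ev (8*i+p)) (ev (8*j+q))) \<in> center (LL N) (hb N)"
      by (rule proj_center[OF c cross_center[OF i j ij p q]])
    show "cpt j (proj I J (hb N (ev (8*i+p)) (ev (8*j+q)))) = kb u (ev q)"
      using proj_hb1[OF c evL[OF i p] evL[OF j q]] j q p ij
      by (simp add: cpt_hb cpt_ev_same u_def)
  qed (use j g in auto)
  then show ?thesis using g by (simp add: u_def cpt_def)
qed

lemma cen_lam:
  assumes c: "compl N I J" and ij: "i < j" "j < N"
  shows "proj I J (ev (8*i)) (8*i) = proj I J (ev (8*j)) (8*j)"
proof -
  have i: "i < N" using ij by simp
  have eL: "ev (8*i) \<in> LL N" "ev (8*j) \<in> LL N" using evL[OF i, of 0] evL[OF ij(2), of 0] by simp_all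
  have "hb N (proj I J (ev (8*i))) (ev (8*j)) = hb N (ev (8*i)) (proj I J (ev (8*j)))"
    using proj_hb1[OF c eL] proj_hb2[OF c eL] by simp
  then have "hb N (proj I J (ev (8*i))) (ev (8*j)) (aidx N i j) = hb N (ev (8*i)) (proj I J (ev (8*j))) (aidx N i j)"
    by simp
  then show ?thesis using ij by (simp add: hb_aidx ev_def)
qed

lemma cen_lam0:
  assumes c: "compl N I J" and i: "i < N"
  shows "proj I J (ev (8*i)) (8*i) = proj I J (ev 0) 0"
proof (cases "i = 0")
  case True then show ?thesis by simp
next
  case False then show ?thesis using cen_lam[OF c, of 0 i] i by simp
qed

lemma bracket_rep:
  assumes x: "x \<in> Vd N" and w: "2 \<le> wt N x"
  shows "\<exists>a b. a \<in> LL N \<and> b \<in> LL N \<and> ev x = hb N a b"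
proof (cases "x < 8*N")
  case True
  define i where "i = x div 8"
  define s where "s = x mod 8"
  have xe: "x = 8*i+s" by (simp add: i_def s_def)
  have i: "i < N" using True by (simp add: i_def)
  have s8: "s < 8" by (simp add: s_def)
  have "kw s \<ge> 2" using w wt_cpt[OF i s8] xe by simp
  then have "s \<ge> 4" by (simp add: kw_def split: if_splits)
  then consider "s = 4" | "s = 5" | "s = 6" | "s = 7" using s8 by linarith
  then show ?thesis
  proof cases
    case 1 then show ?thesis using hb_basis(1)[OF i] evL[OF i, of 0] evL[OF i, of 1] xe by force
  next
    case 2 then show ?thesis using hb_basis(2)[OF i] evL[OF i, of 0] evL[OF i, of 2] xe by force
  next
    case 3 then show ?thesis using hb_basis(3)[OF i] evL[OF i, of 5] evL[OF i, of 1] xe by force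
  next
    case 4 then show ?thesis using hb_basis(4)[OF i] evL[OF i, of 4] evL[OF i, of 0] xe by force
  qed
next
  case False
  then obtain i j where ij: "i < j" "j < N" "x = aidx N i j" using x by (auto simp: Vd_def)
  have i: "i < N" using ij by simp
  show ?thesis using hb_cross_aidx[OF ij(1,2)] evL[OF i, of 0] evL[OF ij(2), of 0] ij(3) by force
qed


lemma cen_basis:
  assumes c: "compl N I J" and x: "x \<in> Vd N" and N: "0 < N"
  shows "proj I J (ev x) - scl (proj I J (ev 0) 0) (ev x) \<in> SS N 2"
proof (cases "2 \<le> wt N x")
  case True
  obtain a b where ab: "a \<in> LL N" "b \<in> LL N" "ev x = hb N a b" using bracket_rep[OF x True] by blast
  have h: "hb N (proj I J a) b \<in> SS N (1 + 1)"
    by (rule hb_SS) (use proj_LL[OF c ab(1)] ab(2) SS_1 in auto)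
  have t: "proj I J (ev x) \<in> SS N 2" using h proj_hb1[OF c ab(1,2)] ab(3) by (simp only: one_add_one)
  have "ev x \<in> SS N 2" using ev_SS[OF x] SS_mono[OF True] by blast
  then have "scl (proj I J (ev 0) 0) (ev x) \<in> SS N 2" using SS_subspace V.subspace_scale by blast
  then show ?thesis using t SS_subspace V.subspace_diff by blast
next
  case False
  then have x8: "x < 8*N" by (simp add: wt_def split: if_splits)
  define i where "i = x div 8"
  define p where "p = x mod 8"
  have xe: "x = 8*i+p" by (simp add: i_def p_def)
  have i: "i < N" using x8 by (simp add: i_def)
  have p: "p < 4" using False x8 by (simp add: wt_def kw_def p_def split: if_splits)
  have eL: "ev x \<in> LL N" using ev_in_LL[OF x] .
  have inL: "proj I J (ev x) - scl (proj I J (ev 0) 0) (ev x) \<in> LL N"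
    using proj_LL[OF c eL] eL LL_subspace V.subspace_diff V.subspace_scale by blast
  have "(proj I J (ev x) - scl (proj I J (ev 0) 0) (ev x)) y = 0" if y: "wt N y < 2" for y
  proof -
    have y8: "y < 8*N" using y by (simp add: wt_def split: if_splits)
    define j where "j = y div 8"
    define g where "g = y mod 8"
    have ye: "y = 8*j+g" by (simp add: j_def g_def)
    have j: "j < N" using y8 by (simp add: j_def)
    have g: "g < 4" using y y8 by (simp add: wt_def kw_def g_def split: if_splits)
    show ?thesis
    proof (cases "j = i")
      case True
      then show ?thesis using cen_diag[OF c i p g] cen_lam0[OF c i] xe ye
        by (auto simp: ev_def)
    next
      case False
      have "ev x y = 0" using False xe ye p g by (auto simp: ev_def)
      then show ?thesis using cen_off[OF c i j _ _ g, of p] False p xe ye by simp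
    qed
  qed
  then show ?thesis using inL by (simp add: SS_def)
qed

lemma cen_all:
  assumes c: "compl N I J" and N: "0 < N" and v: "v \<in> LL N"
  shows "proj I J v - scl (proj I J (ev 0) 0) v \<in> SS N 2"
proof -
  define l where "l = proj I J (ev 0) 0"
  have lin: "lin_on N (\<lambda>v. proj I J v - scl l v)"
    unfolding lin_on_def
    using lin_add[OF proj_lin[OF c]] lin_scl[OF proj_lin[OF c]]
    by (auto simp: fun_eq_iff algebra_simps)
  show ?thesis unfolding l_def[symmetric]
    by (rule lin_into[OF lin SS_subspace v]) (use cen_basis[OF c _ N] l_def in auto)
qed

lemma ideal_small:
  assumes c: "compl N K K'" and K2: "K \<subseteq> SS N 2"
  shows "K = {0}"
proof -
  have "K \<subseteq> SS N (r + 2)" for r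
  proof (induction r)
    case 0 then show ?case using K2 by (simp only: add_0)
  next
    case (Suc r)
    show ?case
    proof
      fix v assume v: "v \<in> K"
      have vL: "v \<in> LL N" using v compl_sub(3)[OF c] by blast
      have "proj K K' v \<in> SS N (Suc r + 2)"
      proof (rule lin_into[OF proj_lin[OF c] SS_subspace vL])
        fix x assume x: "x \<in> Vd N" "v x \<noteq> 0"
        have vS: "v \<in> SS N 2" using K2 v by blast
        have "\<not> wt N x < 2" using vS x(2) by (auto simp: SS_def)
        then have "2 \<le> wt N x" by simp
        then obtain a b where ab: "a \<in> LL N" "b \<in> LL N" "ev x = hb N a b" using bracket_rep[OF x(1)] by blast
        have "proj K K' a \<in> SS N (r + 2)" "proj K K' b \<in> SS N (r + 2)"
          using proj_spec(1)[OF c ab(1)] proj_spec(1)[OF c ab(2)] Suc by auto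
        then have "hb N (proj K K' a) (proj K K' b) \<in> SS N ((r + 2) + (r + 2))" by (rule hb_SS)
        then have "hb N (proj K K' a) (proj K K' b) \<in> SS N (Suc r + 2)" using SS_mono[of "Suc r + 2" "(r+2)+(r+2)" N] by auto
        then show "proj K K' (ev x) \<in> SS N (Suc r + 2)" using proj_hom[OF c ab(1,2)] ab(3) by simp
      qed
      then show "v \<in> SS N (Suc r + 2)" using proj_I[OF c v] by simp
    qed
  qed
  from this[of 2] have "K \<subseteq> {0}" using SS_4[of N] by simp
  moreover have "0 \<in> K" using compl_sub(1)[OF c] V.subspace_0 by blast
  ultimately show ?thesis by blast
qed

lemma nonsplit_LL:
  assumes N: "0 < N"
  shows "nonsplit (LL N) (hb N)"
  unfolding nonsplit_def
proof
  assume "\<exists>I J. lie_ideal (LL N) (hb N) I \<and> lie_ideal (LL N) (hb N) J \<and> I \<noteq> {0} \<and> J \<noteq> {0} \<and>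
              I \<inter> J = {0} \<and> {a + b | a b. a \<in> I \<and> b \<in> J} = LL N"
  then obtain I J where c: "compl N I J" and I0: "I \<noteq> {0}" and J0: "J \<noteq> {0}"
    unfolding compl_def by blast
  define l where "l = proj I J (ev 0) 0"
  show False
  proof (cases "l = 1")
    case True
    have "J \<subseteq> SS N 2"
    proof
      fix v assume v: "v \<in> J"
      have vL: "v \<in> LL N" using v compl_sub(4)[OF c] by blast
      have "proj I J v - scl l v \<in> SS N 2" using cen_all[OF c N vL] l_def by simp
      then have "- v \<in> SS N 2" using proj_J[OF c v] True by simp
      then have "- (- v) \<in> SS N 2" using SS_subspace V.subspace_neg by blast
      then show "v \<in> SS N 2" by simp
    qed
    then have "J = {0}" by (rule ideal_small[OF compl_sym[OF c]])
    then show False using J0 by simp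
  next
    case False
    have "I \<subseteq> SS N 2"
    proof
      fix v assume v: "v \<in> I"
      have vL: "v \<in> LL N" using v compl_sub(3)[OF c] by blast
      have "proj I J v - scl l v \<in> SS N 2" using cen_all[OF c N vL] l_def by simp
      then have "scl (1 - l) v \<in> SS N 2" using proj_I[OF c v]
        by (simp add: fun_eq_iff algebra_simps)
      then have "scl (1 / (1 - l)) (scl (1 - l) v) \<in> SS N 2" using SS_subspace V.subspace_scale by blast
      then show "v \<in> SS N 2" using False by simp
    qed
    then have "I = {0}" by (rule ideal_small[OF c])
    then show False using I0 by simp
  qed
qed



lemma ev_inj: "inj ev"
proof (rule injI)
  fix a b assume "ev a = ev b"
  then have "ev a a = ev b a" by simp
  then show "a = b" by (simp add: ev_def split: if_splits)
qed

lemma ev_indep: assumes X: "finite X" shows "V.independent (ev ` X)"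
proof (rule V.independent_if_scalars_zero)
  show "finite (ev ` X)" using X by simp
  fix f x assume s: "(\<Sum>v\<in>ev ` X. scl (f v) v) = 0" and x: "x \<in> ev ` X"
  then obtain y where y: "y \<in> X" "x = ev y" by blast
  have "0 = (\<Sum>v\<in>ev ` X. scl (f v) v) y" using s by simp
  also have "\<dots> = (\<Sum>v\<in>ev ` X. f v * v y)" by (simp add: sum_vec_apply)
  also have "\<dots> = (\<Sum>z\<in>X. f (ev z) * ev z y)"
    using sum.reindex[of ev X "\<lambda>v. f v * v y"] inj_on_subset[OF ev_inj] by simp
  also have "\<dots> = (\<Sum>z\<in>X. if y = z then f (ev z) else 0)" by (rule sum.cong) (auto simp: ev_def)
  also have "\<dots> = f (ev y)" using X y by (simp add: sum.delta)
  finally show "f x = 0" using y by simp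
qed

definition Aset :: "nat \<Rightarrow> nat set" where "Aset N = {aidx N i j | i j. i < j \<and> j < N}"

lemma Vd_eq: "Vd N = {..<8*N} \<union> Aset N" by (auto simp: Vd_def Aset_def)

lemma Aset_finite: "finite (Aset N)" using Vd_finite[of N] by (rule finite_subset[rotated]) (auto simp: Vd_eq)

lemma dim_center_ge: "card (Aset N) \<le> vdim (center (LL N) (hb N))"
proof -
  let ?Z = "center (LL N) (hb N)"
  have B: "ev ` Aset N \<subseteq> ?Z"
  proof
    fix v assume "v \<in> ev ` Aset N"
    then obtain i j where ij: "i < j" "j < N" "v = ev (aidx N i j)" by (auto simp: Aset_def)
    have "ev (aidx N i j) \<in> LL N" by (rule ev_in_LL[OF aidx_in_Vd[OF ij(1,2)]])
    then have "ev (aidx N i j) \<in> ?Z" by (rule cpt0_center) (simp add: cpt_ev_aidx)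
    then show "v \<in> ?Z" using ij by simp
  qed
  obtain C where C: "C \<subseteq> ?Z" "V.independent C" "?Z \<subseteq> vspan C" "card C = vdim ?Z"
    using V.basis_exists by blast
  have "C \<subseteq> vspan (ev ` Vd N)" using C(1) span_LL[of N] by (auto simp: center_def)
  then have Cf: "finite C" using V.independent_span_bound[of "ev ` Vd N" C] C(2) Vd_finite by auto
  have "ev ` Aset N \<subseteq> vspan C" using B C(3) by blast
  then have "card (ev ` Aset N) \<le> card C"
    using V.independent_span_bound[OF Cf ev_indep[OF Aset_finite]] by blast
  moreover have "card (ev ` Aset N) = card (Aset N)" using inj_on_subset[OF ev_inj] by (simp add: card_image)
  ultimately show ?thesis using C(4) by simp
qed

lemma dim_derived_le: "vdim (derived (LL N) (hb N)) \<le> 8*N + card (Aset N)"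
proof -
  have "derived (LL N) (hb N) \<subseteq> LL N"
    unfolding derived_def by (rule V.span_minimal) (auto simp: hb_in_LL LL_subspace)
  then have "derived (LL N) (hb N) \<subseteq> vspan (ev ` Vd N)" using span_LL by simp
  then have "vdim (derived (LL N) (hb N)) \<le> card (ev ` Vd N)"
    by (rule V.dim_le_card) (simp add: Vd_finite)
  also have "\<dots> \<le> card (Vd N)" by (rule card_image_le[OF Vd_finite])
  also have "\<dots> \<le> card {..<8*N} + card (Aset N)" unfolding Vd_eq by (rule card_Un_le)
  finally show ?thesis by simp
qed

lemma card_Aset_ge: "K * K \<le> card (Aset (2*K))"
proof -
  let ?f = "\<lambda>(i, j). aidx (2*K) i j"
  have el: "aidx (2*K) a b \<in> Aset (2*K)" if "a < K" "K \<le> b" "b < 2*K" for a b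
    unfolding Aset_def using that by (intro CollectI exI[of _ a] exI[of _ b]) simp
  have sub: "?f ` ({..<K} \<times> {K..<2*K}) \<subseteq> Aset (2*K)" using el by auto
  have inj: "inj_on ?f ({..<K} \<times> {K..<2*K})"
    by (rule inj_onI) (auto simp: aidx_inj)
  have "card (?f ` ({..<K} \<times> {K..<2*K})) = K * K"
    using card_image[OF inj] by (simp add: card_cartesian_product)
  then show ?thesis using card_mono[OF Aset_finite sub] by simp
qed

theorem mainTheorem3:
  fixes \<epsilon> :: real
  assumes "\<epsilon> > 0"
  shows "\<exists>L br. lie_algebra L br \<and> nonsplit L br \<and> char_nilpotent L br \<and>
           vdim (center L br) > 0 \<and>
           (real (vdim (derived L br)) - real (vdim (center L br))) / real (vdim (center L br)) < \<epsilon>"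
proof -
  define K where "K = nat \<lceil>16 / \<epsilon>\<rceil> + 1"
  define N where "N = 2 * K"
  have K1: "K \<ge> 1" by (simp add: K_def)
  have Kbig: "real K > 16 / \<epsilon>"
  proof -
    have "16 / \<epsilon> \<le> real (nat \<lceil>16 / \<epsilon>\<rceil>)" by linarith
    then show ?thesis by (simp add: K_def)
  qed
  have N0: "0 < N" using K1 by (simp add: N_def)
  define dZ where "dZ = vdim (center (LL N) (hb N))"
  define dD where "dD = vdim (derived (LL N) (hb N))"
  have cA: "K * K \<le> card (Aset N)" using card_Aset_ge[of K] by (simp add: N_def)
  have Z: "card (Aset N) \<le> dZ" using dim_center_ge[of N] by (simp add: dZ_def)
  have D: "dD \<le> 16 * K + card (Aset N)" using dim_derived_le[of N] by (simp add: dD_def N_def)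
  have KK: "real K * real K \<le> real dZ" using cA Z by (metis le_trans of_nat_le_iff of_nat_mult)
  have K0: "real K > 0" using K1 by simp
  have dZpos: "real dZ > 0" using KK K0 by (metis mult_pos_pos order_less_le_trans)
  have num: "real dD - real dZ \<le> 16 * real K" using D Z by linarith
  have "(real dD - real dZ) / real dZ \<le> 16 * real K / real dZ"
    using num dZpos by (simp add: divide_right_mono)
  also have "\<dots> \<le> 16 * real K / (real K * real K)"
    using KK K0 dZpos by (intro divide_left_mono mult_pos_pos) auto
  also have "\<dots> = 16 / real K" using K0 by simp
  also have "\<dots> < \<epsilon>" using Kbig K0 assms by (simp add: divide_less_eq mult.commute)
  finally have ratio: "(real dD - real dZ) / real dZ < \<epsilon>" .
  show ?thesis
  proof (intro exI conjI)
    show "lie_algebra (LL N) (hb N)" by (rule lie_LL)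
    show "nonsplit (LL N) (hb N)" by (rule nonsplit_LL[OF N0])
    show "char_nilpotent (LL N) (hb N)" by (rule char_nil)
    show "vdim (center (LL N) (hb N)) > 0" using dZpos by (simp add: dZ_def)
    show "(real (vdim (derived (LL N) (hb N))) - real (vdim (center (LL N) (hb N)))) / real (vdim (center (LL N) (hb N))) < \<epsilon>"
      using ratio by (simp add: dZ_def dD_def)
  qed
qed


end
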